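(* Let $s\ge1$, let $q$ be a prime power, let $t\in\mathbb{N}_0$, and let $C^{(1)},\ldots,C^{(s)}\in\mathbb{F}_q^{\mathbb{N}\times\mathbb{N}_0}$ be finite-row generating matrices such that for every $m>t$ and all integers $d_1,\ldots,d_s\ge0$ with $1\le d_1+\cdots+d_s\le m-t$, the vectors $(c^{(i)}_{j,0},\ldots,c^{(i)}_{j,m-1})\in\mathbb{F}_q^m$, $1\le j\le d_i$, $1\le i\le s$, are linearly independent. Let $\alpha\in\mathbb{Z}_q$ and $v\in\mathbb{N}$ with $\gcd(v,q)=1$, and set $s_n=\frac1v n+\alpha\in\mathbb{Z}_q$ ($n\ge0$). Then the sequence $\mathcal{S}$ produced by Algorithm 2 with these matrices, the input $(s_n)_{n\ge0}$ and any choice of bijections $\psi_r,\lambda_{i,j}$ is a low-discrepancy sequence, i.e. $ND_N^*(\mathcal{S})=O((\log N)^s)$ for $N\ge2$, with implied constant independent of $N$.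
   Context: $\mathbb{F}_q$ is the finite field with $q$ elements, $D_q=\{0,\ldots,q-1\}$; $\mathbb{Z}_q$ is the ring of $q$-adic integers, each $z\in\mathbb{Z}_q$ having a unique representation $z=\sum_{r\ge0}a_rq^r$, $a_r\in D_q$; since $\gcd(v,q)=1$, $v$ is a unit in $\mathbb{Z}_q$ and $\frac1v\in\mathbb{Z}_q$. A matrix $(c^{(i)}_{j,r})_{j\ge1,r\ge0}$ is finite-row if each row has finitely many nonzero entries. Algorithm 2: choose bijections $\psi_r:D_q\to\mathbb{F}_q$ ($r\ge0$), finite-row matrices $C^{(i)}=(c^{(i)}_{j,r})$, bijections $\lambda_{i,j}:\mathbb{F}_q\to D_q$ and $(s_n)$ in $\mathbb{Z}_q$; with $s_n=\sum_ra_rq^r$ put $x_n^{(i)}=\sum_{j\ge1}\lambda_{i,j}(\sum_rc^{(i)}_{j,r}\psi_r(a_r))q^{-j}$, $\boldsymbol{x}_n=(x_n^{(1)},\ldots,x_n^{(s)})\in[0,1]^s$. Star discrepancy: $D_N^*(\mathcal{S})=\sup_J|A(J)/N-\mathrm{vol}(J)|$, sup over subintervals $J\subseteq[0,1]^s$ with one vertex at the origin, $A(J)=\#\{0\le n<N:\boldsymbol{x}_n\in J\}$. *)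

theory Defs
  imports "HOL-Analysis.Analysis" "HOL-Number_Theory.Cong"
begin

text \<open>q-adic integers are represented by their digit sequences \<open>a :: nat \<Rightarrow> nat\<close>,
  \<open>z = \<Sum>r. a r * q^r\<close>, with all digits in \<open>D_q = {0..<q}\<close>.\<close>

definition qadic_digits :: "nat \<Rightarrow> (nat \<Rightarrow> nat) \<Rightarrow> bool" where
  "qadic_digits q a \<longleftrightarrow> (\<forall>r. a r < q)"

definition qadic_trunc :: "nat \<Rightarrow> (nat \<Rightarrow> nat) \<Rightarrow> nat \<Rightarrow> int" where
  "qadic_trunc q a k = (\<Sum>r<k. int (a r) * int q ^ r)"

text \<open>\<open>a\<close> is the digit sequence of the q-adic integer \<open>n/v + \<alpha>\<close>, i.e. of the unique
  \<open>z \<in> \<int>_q\<close> with \<open>v (z - \<alpha>) = n\<close>; equality in \<open>\<int>_q\<close> means congruence modulo every \<open>q^k\<close>.\<close>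
definition is_qadic_seq_term ::
    "nat \<Rightarrow> nat \<Rightarrow> (nat \<Rightarrow> nat) \<Rightarrow> nat \<Rightarrow> (nat \<Rightarrow> nat) \<Rightarrow> bool" where
  "is_qadic_seq_term q v \<alpha> n a \<longleftrightarrow> qadic_digits q a \<and>
     (\<forall>k. [int v * (qadic_trunc q a k - qadic_trunc q \<alpha> k) = int n] (mod (int q ^ k)))"

text \<open>Algorithm 2: the i-th coordinate of the n-th point, given the digits \<open>a\<close> of \<open>s_n\<close>.
  Matrices are \<open>C i j r = c^{(i)}_{j,r}\<close>; \<open>\<psi> r : D_q \<rightarrow> F_q\<close>, \<open>lam i j : F_q \<rightarrow> D_q\<close>.\<close>
definition alg2_coord ::
    "(nat \<Rightarrow> nat \<Rightarrow> nat \<Rightarrow> 'f::{field,finite}) \<Rightarrow> (nat \<Rightarrow> nat \<Rightarrow> 'f)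
     \<Rightarrow> (nat \<Rightarrow> nat \<Rightarrow> 'f \<Rightarrow> nat) \<Rightarrow> (nat \<Rightarrow> nat) \<Rightarrow> nat \<Rightarrow> real" where
  "alg2_coord C \<psi> lam a i =
     (\<Sum>j. real (lam i (Suc j) (\<Sum>r\<in>{r. C i (Suc j) r \<noteq> 0}. C i (Suc j) r * \<psi> r (a r)))
           / real CARD('f) ^ Suc j)"

definition star_discrepancy :: "nat \<Rightarrow> (nat \<Rightarrow> nat \<Rightarrow> real) \<Rightarrow> nat \<Rightarrow> real" where
  "star_discrepancy s x N =
     (SUP b\<in>{b::nat\<Rightarrow>real. \<forall>i\<in>{1..s}. 0 \<le> b i \<and> b i \<le> 1}.
        \<bar>real (card {n. n < N \<and> (\<forall>i\<in>{1..s}. x n i < b i)}) / real N - (\<Prod>i=1..s. b i)\<bar>)"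

end

theory Submission
  imports Defs
begin

lemma digsum_lt:
  fixes q :: nat assumes "\<And>r. r < m \<Longrightarrow> d r < q"
  shows "(\<Sum>r<m. d r * q ^ r) < q ^ m"
  using assms
proof (induction m)
  case 0 then show ?case by simp
next
  case (Suc m)
  have "(\<Sum>r<Suc m. d r * q ^ r) = (\<Sum>r<m. d r * q ^ r) + d m * q ^ m" by simp
  also have "\<dots> < q ^ m + d m * q ^ m" using Suc by simp
  also have "\<dots> = (d m + 1) * q ^ m" by simp
  also have "\<dots> \<le> q * q ^ m" using Suc.prems[of m] by (intro mult_right_mono) auto
  finally show ?case by simp
qed

lemma digsum_div:
  fixes q :: nat assumes "\<And>r. r < m \<Longrightarrow> d r < q" and "e \<le> m"
  shows "(\<Sum>r<m. d r * q ^ r) div q ^ e = (\<Sum>r<m-e. d (r+e) * q ^ r)"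
proof -
  have split: "(\<Sum>r<m. d r * q ^ r) = (\<Sum>r<e. d r * q ^ r) + q^e * (\<Sum>r<m-e. d (r+e) * q ^ r)"
  proof -
    have "{..<m} = {..<e} \<union> {e..<m}" using assms(2) by auto
    hence "(\<Sum>r<m. d r * q ^ r) = (\<Sum>r\<in>{..<e} \<union> {e..<m}. d r * q ^ r)" by simp
    also have "\<dots> = (\<Sum>r<e. d r * q ^ r) + (\<Sum>r\<in>{e..<m}. d r * q ^ r)"
      by (rule sum.union_disjoint) auto
    finally have "(\<Sum>r<m. d r * q ^ r) = (\<Sum>r<e. d r * q ^ r) + (\<Sum>r\<in>{e..<m}. d r * q ^ r)" .
    moreover have "(\<Sum>r\<in>{e..<m}. d r * q ^ r) = (\<Sum>r<m-e. d (r+e) * q ^ (r+e))"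
    proof -
      have "{e..<m} = {0+e..<(m-e)+e}" using assms(2) by simp
      then show ?thesis by (simp only: sum.shift_bounds_nat_ivl lessThan_atLeast0)
    qed
    moreover have "(\<Sum>r<m-e. d (r+e) * q ^ (r+e)) = q^e * (\<Sum>r<m-e. d (r+e) * q ^ r)"
      by (simp add: sum_distrib_left power_add mult.commute mult.left_commute)
    ultimately show ?thesis by simp
  qed
  have lt: "(\<Sum>r<e. d r * q ^ r) < q ^ e" using assms by (intro digsum_lt) auto
  have ne: "q ^ e \<noteq> 0"
  proof
    assume "q ^ e = 0" then show False using lt by (metis not_less_zero)
  qed
  show ?thesis unfolding split using lt ne by (simp add: div_mult_self2 div_less)
qed

lemma digsum_digit:
  fixes q :: nat assumes "\<And>r. r < m \<Longrightarrow> d r < q" and "e < m"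
  shows "((\<Sum>r<m. d r * q ^ r) div q ^ e) mod q = d e"
proof -
  have "(\<Sum>r<m. d r * q ^ r) div q ^ e = (\<Sum>r<m-e. d (r+e) * q ^ r)"
    using assms by (intro digsum_div) auto
  also have "\<dots> = d e + q * (\<Sum>r<m-e-1. d (r+1+e) * q ^ r)"
  proof -
    obtain k where k: "m - e = Suc k" using assms by (metis Suc_diff_Suc)
    have "k = m - e - 1" using k by simp
    show ?thesis unfolding k \<open>k = m - e - 1\<close>[symmetric]
      by (simp only: sum.lessThan_Suc_shift) (simp add: sum_distrib_left mult_ac)
  qed
  finally show ?thesis using assms(1)[of e] assms(2) by simp
qed

lemma nat_digits_repr:
  fixes q y :: nat assumes "y < q ^ m" "q \<ge> 2"
  shows "y = (\<Sum>r<m. ((y div q ^ r) mod q) * q ^ r)"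
  using assms(1)
proof (induction m arbitrary: y)
  case 0 then show ?case by simp
next
  case (Suc m)
  have "y div q < q ^ m" using Suc.prems assms(2)
    by (simp add: div_less_iff_less_mult mult.commute)
  hence IH: "y div q = (\<Sum>r<m. ((y div q div q ^ r) mod q) * q ^ r)" using Suc.IH by blast
  have "(\<Sum>r<Suc m. ((y div q ^ r) mod q) * q ^ r) = y mod q + (\<Sum>r<m. ((y div q ^ Suc r) mod q) * q ^ Suc r)"
    by (simp only: sum.lessThan_Suc_shift) simp
  also have "(\<Sum>r<m. ((y div q ^ Suc r) mod q) * q ^ Suc r) = q * (\<Sum>r<m. ((y div q div q ^ r) mod q) * q ^ r)"
    by (simp add: sum_distrib_left div_mult2_eq mult.assoc mult.left_commute)
  also have "\<dots> = q * (y div q)" using IH by simp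
  finally show ?case by simp
qed

lemma card_partition_fun:
  assumes "finite A" "finite B" "f ` A \<subseteq> B"
  shows "card A = (\<Sum>b\<in>B. card {x\<in>A. f x = b})"
proof -
  have "(\<Sum>b\<in>B. (\<Sum>x\<in>{x\<in>A. f x = b}. (1::nat))) = (\<Sum>x\<in>A. 1)"
    using sum.group[OF assms, of "\<lambda>_. 1::nat"] by simp
  then show ?thesis by simp
qed

lemma sum_upd_eq:
  fixes u x :: "'j \<Rightarrow> 'f::field"
  assumes "finite I" "r0 \<in> I"
  shows "(\<Sum>r\<in>I. u r * (x(r0 := v)) r) = (\<Sum>r\<in>I. u r * x r) + u r0 * (v - x r0)"
proof -
  have "(\<Sum>r\<in>I. u r * (x(r0 := v)) r) = u r0 * v + (\<Sum>r\<in>I-{r0}. u r * x r)"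
    using assms by (simp add: sum.remove)
  moreover have "(\<Sum>r\<in>I. u r * x r) = u r0 * x r0 + (\<Sum>r\<in>I-{r0}. u r * x r)"
    using assms by (simp add: sum.remove)
  ultimately show ?thesis by (simp add: algebra_simps)
qed

lemma fiber_one:
  fixes u :: "'j \<Rightarrow> 'f::{field,finite}"
  assumes fin: "finite I" and r0: "r0 \<in> I" "u r0 \<noteq> 0"
  shows "card {x \<in> PiE I (\<lambda>_. UNIV). (\<Sum>r\<in>I. u r * x r) = c} * CARD('f) = CARD('f) ^ card I"
proof -
  define F where "F c = {x \<in> PiE I (\<lambda>_. UNIV). (\<Sum>r\<in>I. u r * x r) = c}" for c
  have eq: "card (F c) = card (F 0)" for c
  proof -
    have "bij_betw (\<lambda>x. x(r0 := x r0 + c / u r0)) (F 0) (F c)"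
    proof (rule bij_betw_byWitness[where f' = "\<lambda>x. x(r0 := x r0 - c / u r0)"])
      show "\<forall>a\<in>F 0. (a(r0 := a r0 + c / u r0))(r0 := (a(r0 := a r0 + c / u r0)) r0 - c / u r0) = a"
        by auto
      show "\<forall>a'\<in>F c. (a'(r0 := a' r0 - c / u r0))(r0 := (a'(r0 := a' r0 - c / u r0)) r0 + c / u r0) = a'"
        by auto
      show "(\<lambda>x. x(r0 := x r0 + c / u r0)) ` F 0 \<subseteq> F c"
      proof
        fix y assume "y \<in> (\<lambda>x. x(r0 := x r0 + c / u r0)) ` F 0"
        then obtain x where x: "x \<in> F 0" "y = x(r0 := x r0 + c / u r0)" by auto
        have "(\<Sum>r\<in>I. u r * y r) = c"
          unfolding x(2) sum_upd_eq[OF fin r0(1)] using x(1) r0(2) by (simp add: F_def)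
        moreover have "y \<in> PiE I (\<lambda>_. UNIV)" using x r0 by (auto simp: F_def PiE_def extensional_def)
        ultimately show "y \<in> F c" by (simp add: F_def)
      qed
      show "(\<lambda>x. x(r0 := x r0 - c / u r0)) ` F c \<subseteq> F 0"
      proof
        fix y assume "y \<in> (\<lambda>x. x(r0 := x r0 - c / u r0)) ` F c"
        then obtain x where x: "x \<in> F c" "y = x(r0 := x r0 - c / u r0)" by auto
        have "(\<Sum>r\<in>I. u r * y r) = 0"
          unfolding x(2) sum_upd_eq[OF fin r0(1)] using x(1) r0(2) by (simp add: F_def)
        moreover have "y \<in> PiE I (\<lambda>_. UNIV)" using x r0 by (auto simp: F_def PiE_def extensional_def)
        ultimately show "y \<in> F 0" by (simp add: F_def)
      qed
    qed
    then show ?thesis by (simp add: bij_betw_same_card)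
  qed
  have "card (PiE I (\<lambda>_. UNIV::'f set)) = (\<Sum>c\<in>UNIV. card (F c))"
    unfolding F_def using fin by (intro card_partition_fun) (auto simp: finite_PiE)
  also have "\<dots> = CARD('f) * card (F 0)" by (subst sum.cong[OF refl eq]) simp
  finally have "CARD('f) ^ card I = CARD('f) * card (F 0)" using fin by (simp add: card_PiE)
  then show ?thesis using eq[of c] by (simp add: F_def mult.commute)
qed

lemma card_filter_sum:
  assumes "finite A"
  shows "card {x\<in>A. Q x} = (\<Sum>x\<in>A. if Q x then 1 else (0::nat))"
  using sum.inter_filter[OF assms, of "\<lambda>_. 1::nat" Q] by simp

lemma card_field_ge2: "CARD('f::{field,finite}) \<ge> 2"
proof -
  have "card {0::'f, 1} \<le> CARD('f)" by (rule card_mono) auto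
  then show ?thesis by simp
qed

lemma lin_fiber_card:
  fixes a :: "'j \<Rightarrow> nat \<Rightarrow> 'f::{field,finite}" and g :: "'j \<Rightarrow> 'f"
  assumes fin: "finite J"
    and indep: "\<And>e::'j\<Rightarrow>'f. (\<forall>r<T. (\<Sum>l\<in>J. e l * a l r) = 0) \<Longrightarrow> \<forall>l\<in>J. e l = 0"
  shows "card {x \<in> PiE {..<T} (\<lambda>_. UNIV). \<forall>l\<in>J. (\<Sum>r<T. a l r * x r) = g l} * CARD('f) ^ card J
           = CARD('f) ^ T"
proof -
  define q where "q = CARD('f)"
  have q2: "q \<ge> 2" unfolding q_def by (rule card_field_ge2)
  define P where "P = PiE {..<T} (\<lambda>_. UNIV::'f set)"
  define G where "G = PiE J (\<lambda>_. UNIV::'f set)"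
  define w where "w x l = (\<Sum>r<T. a l r * x r)" for x :: "nat \<Rightarrow> 'f" and l
  define ker where "ker = {x\<in>P. \<forall>l\<in>J. w x l = 0}"
  define k where "k = card ker"
  define K where "K = card J"
  have finP: "finite P" unfolding P_def by (simp add: finite_PiE)
  have finG: "finite G" unfolding G_def using fin by (simp add: finite_PiE)
  have cardP: "card P = q ^ T" unfolding P_def q_def by (simp add: card_PiE)
  have cardG: "card G = q ^ K" unfolding G_def q_def K_def using fin by (simp add: card_PiE)
  have kerP: "ker \<subseteq> P" unfolding ker_def by auto
  define ind where "ind e x = (if (\<Sum>l\<in>J. e l * w x l) = 0 then (1::nat) else 0)" for e x
  have swap: "(\<Sum>x\<in>P. \<Sum>e\<in>G. ind e x) = (\<Sum>e\<in>G. \<Sum>x\<in>P. ind e x)" by (rule sum.swap)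
  have xs: "q * (\<Sum>e\<in>G. ind e x) = (if x \<in> ker then q * q ^ K else q ^ K)" if x: "x \<in> P" for x
  proof (cases "x \<in> ker")
    case True
    then have "(\<Sum>e\<in>G. ind e x) = card G" by (simp add: ind_def ker_def)
    then show ?thesis using True cardG by simp
  next
    case False
    then obtain l0 where l0: "l0 \<in> J" "w x l0 \<noteq> 0" using x by (auto simp: ker_def)
    have "(\<Sum>e\<in>G. ind e x) = card {e\<in>G. (\<Sum>l\<in>J. w x l * e l) = 0}"
      by (simp add: card_filter_sum[OF finG] ind_def mult.commute)
    moreover have "card {e\<in>G. (\<Sum>l\<in>J. w x l * e l) = 0} * q = q ^ K"
      unfolding G_def q_def K_def using fiber_one[of J l0 "w x" 0] fin l0 by simp
    ultimately show ?thesis using False by (simp add: mult.commute)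
  qed
  have "q * (\<Sum>x\<in>P. \<Sum>e\<in>G. ind e x) = (\<Sum>x\<in>P. q * (\<Sum>e\<in>G. ind e x))"
    by (rule sum_distrib_left)
  also have "\<dots> = (\<Sum>x\<in>P. if x \<in> ker then q * q ^ K else q ^ K)"
    by (rule sum.cong[OF refl]) (rule xs)
  also have "\<dots> = (\<Sum>x\<in>ker. q * q ^ K) + (\<Sum>x\<in>P - ker. q ^ K)"
    using finP kerP by (simp add: sum.If_cases Int_absorb1 Diff_eq Int_commute)
  also have "\<dots> = k * q * q ^ K + (q ^ T - k) * q ^ K"
    using finP kerP cardP by (simp add: k_def card_Diff_subset finite_subset)
  finally have S1: "q * (\<Sum>x\<in>P. \<Sum>e\<in>G. ind e x) = k * q * q ^ K + (q ^ T - k) * q ^ K" .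
  define v where "v e r = (\<Sum>l\<in>J. e l * a l r)" for e :: "'j \<Rightarrow> 'f" and r
  have wv: "(\<Sum>l\<in>J. e l * w x l) = (\<Sum>r<T. v e r * x r)" for e x
    unfolding w_def v_def by (simp add: sum_distrib_left sum_distrib_right mult.assoc sum.swap[of _ J])
  define Z where "Z = {e\<in>G. \<forall>l\<in>J. e l = 0}"
  have Z: "Z = {restrict (\<lambda>_. 0) J}" unfolding Z_def G_def by (auto simp: PiE_def extensional_def)
  have es: "q * (\<Sum>x\<in>P. ind e x) = (if e \<in> Z then q * q ^ T else q ^ T)" if e: "e \<in> G" for e
  proof (cases "e \<in> Z")
    case True
    then have "(\<Sum>x\<in>P. ind e x) = card P" by (simp add: ind_def Z_def)
    then show ?thesis using True cardP by simp
  next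
    case False
    then obtain r0 where r0: "r0 < T" "v e r0 \<noteq> 0" using e indep[of e] by (auto simp: Z_def v_def)
    have "(\<Sum>x\<in>P. ind e x) = card {x\<in>P. (\<Sum>r<T. v e r * x r) = 0}"
      by (simp add: card_filter_sum[OF finP] ind_def wv)
    moreover have "card {x\<in>P. (\<Sum>r<T. v e r * x r) = 0} * q = q ^ T"
      unfolding P_def q_def using fiber_one[of "{..<T}" r0 "v e" 0] r0 by simp
    ultimately show ?thesis using False by (simp add: mult.commute)
  qed
  have ZG: "Z \<subseteq> G" unfolding Z_def by auto
  have "q * (\<Sum>e\<in>G. \<Sum>x\<in>P. ind e x) = (\<Sum>e\<in>G. q * (\<Sum>x\<in>P. ind e x))"
    by (rule sum_distrib_left)
  also have "\<dots> = (\<Sum>e\<in>G. if e \<in> Z then q * q ^ T else q ^ T)"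
    by (rule sum.cong[OF refl]) (rule es)
  also have "\<dots> = (\<Sum>e\<in>Z. q * q ^ T) + (\<Sum>e\<in>G - Z. q ^ T)"
    using finG ZG by (simp add: sum.If_cases Int_absorb1 Diff_eq Int_commute)
  also have "\<dots> = q * q ^ T + (q ^ K - 1) * q ^ T"
    using finG ZG cardG by (simp add: Z card_Diff_subset)
  finally have S2: "q * (\<Sum>e\<in>G. \<Sum>x\<in>P. ind e x) = q * q ^ T + (q ^ K - 1) * q ^ T" .
  have kle: "k \<le> q ^ T" unfolding k_def using card_mono[OF finP kerP] cardP by simp
  have QK: "q ^ K \<ge> 1" using q2 by simp
  have eqn: "k * q * q ^ K + (q ^ T - k) * q ^ K = q * q ^ T + (q ^ K - 1) * q ^ T"
    using S1 S2 swap by simp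
  have eqi: "int k * int q * int (q ^ K) + (int (q ^ T) - int k) * int (q ^ K)
      = int q * int (q ^ T) + (int (q ^ K) - 1) * int (q ^ T)"
    using arg_cong[OF eqn, of int] kle QK by (simp add: of_nat_diff)
  have "(int q - 1) * (int k * int (q ^ K) - int (q ^ T)) = 0" using eqi by algebra
  then have "int k * int q ^ K = int q ^ T" using q2 by simp
  then have kQ: "k * q ^ K = q ^ T" by (metis of_nat_eq_iff of_nat_mult of_nat_power)
  define fib where "fib g = {x\<in>P. \<forall>l\<in>J. w x l = g l}" for g
  have fibk: "card (fib g) = k" if x0: "x0 \<in> fib g" for g x0
  proof -
    have "bij_betw (\<lambda>x. restrict (\<lambda>r. x r - x0 r) {..<T}) (fib g) ker"
    proof (rule bij_betw_byWitness[where f' = "\<lambda>y. restrict (\<lambda>r. y r + x0 r) {..<T}"])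
      show "\<forall>a\<in>fib g. restrict (\<lambda>r. restrict (\<lambda>r. a r - x0 r) {..<T} r + x0 r) {..<T} = a"
        by (auto simp: fib_def P_def PiE_def extensional_def restrict_def)
      show "\<forall>a'\<in>ker. restrict (\<lambda>r. restrict (\<lambda>r. a' r + x0 r) {..<T} r - x0 r) {..<T} = a'"
        by (auto simp: ker_def P_def PiE_def extensional_def restrict_def)
      show "(\<lambda>x. restrict (\<lambda>r. x r - x0 r) {..<T}) ` fib g \<subseteq> ker"
        using x0 by (auto simp: fib_def ker_def P_def w_def right_diff_distrib sum_subtractf)
      show "(\<lambda>y. restrict (\<lambda>r. y r + x0 r) {..<T}) ` ker \<subseteq> fib g"
        using x0 by (auto simp: fib_def ker_def P_def w_def distrib_left sum.distrib)
    qed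
    then show ?thesis by (simp add: bij_betw_same_card k_def)
  qed
  have fib_le: "card (fib g) \<le> k" for g
    using fibk[of _ g] by (cases "fib g = {}") auto
  have part: "card P = (\<Sum>g\<in>G. card (fib g))"
  proof -
    have "card P = (\<Sum>g\<in>G. card {x\<in>P. restrict (w x) J = g})"
      by (rule card_partition_fun[OF finP finG]) (auto simp: G_def)
    also have "\<dots> = (\<Sum>g\<in>G. card (fib g))"
    proof (rule sum.cong[OF refl])
      fix g assume "g \<in> G"
      then have "{x\<in>P. restrict (w x) J = g} = fib g"
        by (auto simp: fib_def G_def PiE_def extensional_def restrict_def fun_eq_iff)
      then show "card {x\<in>P. restrict (w x) J = g} = card (fib g)" by simp
    qed
    finally show ?thesis .
  qed
  have nonempty: "fib g \<noteq> {}" if g: "g \<in> G" for g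
  proof
    assume em: "fib g = {}"
    have "(\<Sum>g'\<in>G. card (fib g')) = (\<Sum>g'\<in>G - {g}. card (fib g'))"
      using g finG em by (simp add: sum.remove)
    also have "\<dots> \<le> (\<Sum>g'\<in>G - {g}. k)" by (rule sum_mono) (rule fib_le)
    also have "\<dots> = (q ^ K - 1) * k" using g finG cardG by simp
    also have "\<dots> < q ^ K * k"
    proof -
      have "k > 0" using kQ q2 by (metis gr0I mult_is_0 power_eq_0_iff not_numeral_le_zero)
      then show ?thesis using QK by simp
    qed
    finally show False using part cardP kQ by (simp add: mult.commute)
  qed
  have rg: "restrict g J \<in> G" unfolding G_def by simp
  have "fib g = fib (restrict g J)" by (auto simp: fib_def)
  then have "card (fib g) = k" using nonempty[OF rg] fibk by auto
  moreover have "{x \<in> PiE {..<T} (\<lambda>_. UNIV). \<forall>l\<in>J. (\<Sum>r<T. a l r * x r) = g l} = fib g"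
    by (simp add: fib_def P_def w_def)
  ultimately show ?thesis using kQ by (simp add: q_def K_def)
qed

lemma prefix_count:
  fixes Q M :: nat
  assumes blk: "\<And>c. card {y. y < Q \<and> \<Phi> (c*Q + y)} = M"
  shows "card {z. z < c*Q \<and> \<Phi> z} = c*M"
proof (induction c)
  case 0 then show ?case by simp
next
  case (Suc c)
  have "{z. z < Suc c * Q \<and> \<Phi> z} = {z. z < c*Q \<and> \<Phi> z} \<union> (\<lambda>y. c*Q + y) ` {y. y < Q \<and> \<Phi> (c*Q + y)}"
  proof (intro set_eqI iffI)
    fix z assume z: "z \<in> {z. z < Suc c * Q \<and> \<Phi> z}"
    show "z \<in> {z. z < c*Q \<and> \<Phi> z} \<union> (\<lambda>y. c*Q + y) ` {y. y < Q \<and> \<Phi> (c*Q + y)}"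
    proof (cases "z < c*Q")
      case True then show ?thesis using z by auto
    next
      case False
      then have "z = c*Q + (z - c*Q)" "z - c*Q < Q" using z by auto
      then show ?thesis using z by (metis (mono_tags, lifting) UnI2 image_eqI mem_Collect_eq)
    qed
  qed auto
  moreover have "card ((\<lambda>y. c*Q + y) ` {y. y < Q \<and> \<Phi> (c*Q + y)}) = M"
    using blk[of c] by (simp add: card_image inj_on_def)
  moreover have "{z. z < c*Q \<and> \<Phi> z} \<inter> (\<lambda>y. c*Q + y) ` {y. y < Q \<and> \<Phi> (c*Q + y)} = {}" by auto
  ultimately show ?case using Suc by (simp add: card_Un_disjoint)
qed

lemma approx_count:
  fixes Q M :: nat
  assumes blk: "\<And>c. card {y. y < Q \<and> \<Phi> (c*Q + y)} = M" and Q: "Q > 0"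
  shows "\<bar>real (card {z. z < Z \<and> \<Phi> z}) - real Z * M / Q\<bar> \<le> M"
proof -
  define c where "c = Z div Q"
  have lo: "c*Q \<le> Z" by (simp add: c_def)
  have hi: "Z < Suc c * Q" using dividend_less_times_div[OF Q, of Z] by (simp add: c_def mult.commute)
  have "card {z. z < c*Q \<and> \<Phi> z} \<le> card {z. z < Z \<and> \<Phi> z}"
    by (rule card_mono) (use lo in auto)
  moreover have "card {z. z < Z \<and> \<Phi> z} \<le> card {z. z < Suc c*Q \<and> \<Phi> z}"
    by (rule card_mono) (use hi in auto)
  ultimately have c1: "c*M \<le> card {z. z < Z \<and> \<Phi> z}" "card {z. z < Z \<and> \<Phi> z} \<le> Suc c*M"
    using prefix_count[OF blk] by metis+
  have r1: "real c * Q \<le> Z" using lo by (metis of_nat_le_iff of_nat_mult)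
  have r2: "real Z < (real c + 1) * Q"
  proof -
    have "real Z < real (Suc c * Q)" using hi by (simp only: of_nat_less_iff)
    then show ?thesis by (simp add: algebra_simps)
  qed
  have m1: "real c * Q * M \<le> real Z * M" using r1 by (intro mult_right_mono) auto
  have m2: "real Z * M \<le> (real c + 1) * Q * M" using r2 by (intro mult_right_mono) auto
  have "real c * M \<le> real Z * M / Q" using m1 Q by (simp add: field_simps)
  moreover have "real Z * M / Q \<le> (real c + 1) * M" using m2 Q by (simp add: field_simps)
  moreover have "real c * M \<le> card {z. z < Z \<and> \<Phi> z}"
    using c1(1) by (metis of_nat_le_iff of_nat_mult)
  moreover have "card {z. z < Z \<and> \<Phi> z} \<le> (real c + 1) * M"
  proof -
    have "real (card {z. z < Z \<and> \<Phi> z}) \<le> real (Suc c * M)" using c1(2) by (simp only: of_nat_le_iff)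
    then show ?thesis by (simp add: algebra_simps)
  qed
  ultimately show ?thesis by (simp add: algebra_simps abs_le_iff)
qed

lemma interval_count:
  fixes Q M :: nat
  assumes blk: "\<And>c. card {y. y < Q \<and> \<Phi> (c*Q + y)} = M" and Q: "Q > 0"
  shows "\<bar>real (card {w. w < W \<and> \<Phi> (z0 + w)}) - real W * M / Q\<bar> \<le> 2 * M"
proof -
  have "{z. z < z0 + W \<and> \<Phi> z} = {z. z < z0 \<and> \<Phi> z} \<union> (\<lambda>w. z0 + w) ` {w. w < W \<and> \<Phi> (z0 + w)}"
  proof (intro set_eqI iffI)
    fix z assume z: "z \<in> {z. z < z0 + W \<and> \<Phi> z}"
    show "z \<in> {z. z < z0 \<and> \<Phi> z} \<union> (\<lambda>w. z0 + w) ` {w. w < W \<and> \<Phi> (z0 + w)}"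
    proof (cases "z < z0")
      case True then show ?thesis using z by auto
    next
      case False
      then have "z = z0 + (z - z0)" "z - z0 < W" using z by auto
      then show ?thesis using z by (metis (mono_tags, lifting) UnI2 image_eqI mem_Collect_eq)
    qed
  qed auto
  moreover have "card ((\<lambda>w. z0 + w) ` {w. w < W \<and> \<Phi> (z0 + w)}) = card {w. w < W \<and> \<Phi> (z0 + w)}"
    by (simp add: card_image inj_on_def)
  moreover have "{z. z < z0 \<and> \<Phi> z} \<inter> (\<lambda>w. z0 + w) ` {w. w < W \<and> \<Phi> (z0 + w)} = {}" by auto
  ultimately have eq: "card {z. z < z0 + W \<and> \<Phi> z} = card {z. z < z0 \<and> \<Phi> z} + card {w. w < W \<and> \<Phi> (z0 + w)}"
    by (simp add: card_Un_disjoint)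
  have a1: "\<bar>real (card {z. z < z0 + W \<and> \<Phi> z}) - real (z0 + W) * M / Q\<bar> \<le> M"
    by (rule approx_count[OF blk Q])
  have a2: "\<bar>real (card {z. z < z0 \<and> \<Phi> z}) - real z0 * M / Q\<bar> \<le> M"
    by (rule approx_count[OF blk Q])
  have "real (z0 + W) * M / Q = real z0 * M / Q + real W * M / Q" by (simp add: add_divide_distrib algebra_simps)
  moreover have "real (card {z. z < z0 + W \<and> \<Phi> z}) = real (card {z. z < z0 \<and> \<Phi> z}) + real (card {w. w < W \<and> \<Phi> (z0 + w)})"
    using eq by simp
  ultimately have a1': "\<bar>real (card {z. z < z0 \<and> \<Phi> z}) + real (card {w. w < W \<and> \<Phi> (z0 + w)})
      - (real z0 * M / Q + real W * M / Q)\<bar> \<le> M"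
    using a1 by simp
  have "\<bar>real (card {w. w < W \<and> \<Phi> (z0 + w)}) - real W * M / Q\<bar> \<le> 2 * real M"
    using a1' a2 unfolding abs_le_iff by linarith
  then show ?thesis by simp
qed

definition cellset :: "nat \<Rightarrow> nat \<Rightarrow> nat set \<Rightarrow> bool" where
  "cellset L q S \<longleftrightarrow> (\<exists>e a. e \<le> L \<and> a < q ^ (L - e) \<and> S = {a * q ^ e ..< (a + 1) * q ^ e})"

lemma A_antimono:
  fixes q U :: nat assumes "m \<le> n"
  shows "q ^ n * (U div q ^ n) \<le> q ^ m * (U div q ^ m)"
  using assms
proof (induction n rule: dec_induct)
  case base then show ?case by simp
next
  case (step n)
  have d: "U div q ^ Suc n = (U div q ^ n) div q" by (simp only: power_Suc2 div_mult2_eq)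
  have "q ^ Suc n * (U div q ^ Suc n) = q ^ n * (q * ((U div q ^ n) div q))"
    unfolding d by (simp add: mult.commute mult.left_commute power_Suc2)
  also have "\<dots> \<le> q ^ n * (U div q ^ n)"
    by (intro mult_left_mono) (auto simp: mult.commute)
  finally show ?case using step by (meson order_trans)
qed

lemma decomp_interval:
  fixes q L U :: nat assumes q: "q \<ge> 2" and U: "U \<le> q ^ L"
  shows "\<exists>Cs. finite Cs \<and> card Cs \<le> (L+1)*q \<and> \<Union>Cs = {..<U} \<and> (\<forall>c\<in>Cs. cellset L q c)
          \<and> (\<forall>c\<in>Cs. \<forall>c'\<in>Cs. c \<noteq> c' \<longrightarrow> c \<inter> c' = {})"
proof -
  define A where "A e = q ^ e * (U div q ^ e)" for e
  define Ix where "Ix = {(e,a). e \<le> L \<and> q * (U div q ^ (e+1)) \<le> a \<and> a < U div q ^ e}"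
  define blk where "blk = (\<lambda>(e,a). {a * q ^ e ..< (a + 1) * q ^ e})"
  define Cs where "Cs = blk ` Ix"
  have qpos: "q ^ e > 0" for e using q by simp
  have Ix_sub: "Ix \<subseteq> Sigma {..L} (\<lambda>e. {q * (U div q ^ (e+1)) ..< U div q ^ e})"
    by (auto simp: Ix_def)
  have finS: "finite (Sigma {..L} (\<lambda>e. {q * (U div q ^ (e+1)) ..< U div q ^ e}))" by auto
  have finIx: "finite Ix" using finite_subset[OF Ix_sub finS] .
  have lvl: "card {q * (U div q ^ (e+1)) ..< U div q ^ e} \<le> q" for e
  proof -
    have "U div q ^ (e+1) = (U div q ^ e) div q" by (simp only: Suc_eq_plus1[symmetric] power_Suc2 div_mult2_eq)
    then have "U div q ^ e - q * (U div q ^ (e+1)) = (U div q ^ e) mod q"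
      by (simp add: minus_div_mult_eq_mod[symmetric] mult.commute)
    also have "\<dots> < q" using q by simp
    finally show ?thesis by simp
  qed
  have "card Cs \<le> card Ix" unfolding Cs_def by (rule card_image_le[OF finIx])
  also have "\<dots> \<le> card (Sigma {..L} (\<lambda>e. {q * (U div q ^ (e+1)) ..< U div q ^ e}))"
    by (rule card_mono[OF finS Ix_sub])
  also have "\<dots> = (\<Sum>e\<le>L. card {q * (U div q ^ (e+1)) ..< U div q ^ e})" by (simp add: card_SigmaI)
  also have "\<dots> \<le> (\<Sum>e\<le>L. q)" by (rule sum_mono) (rule lvl)
  also have "\<dots> = (L+1)*q" by simp
  finally have cardCs: "card Cs \<le> (L+1)*q" .
  have cells: "\<forall>c\<in>Cs. cellset L q c"
  proof
    fix c assume "c \<in> Cs"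
    then obtain e a where ea: "(e,a) \<in> Ix" "c = blk (e,a)" by (auto simp: Cs_def)
    have "a < U div q ^ e" using ea by (simp add: Ix_def)
    also have "\<dots> \<le> q ^ L div q ^ e" using U by (rule div_le_mono)
    also have "\<dots> = q ^ (L - e)" using ea q by (simp add: Ix_def power_diff)
    finally show "cellset L q c" using ea unfolding cellset_def blk_def Ix_def by auto
  qed
  have mem_blk: "y \<in> blk (e,a) \<longleftrightarrow> y div q ^ e = a" for y e a
  proof -
    have "y \<in> blk (e,a) \<longleftrightarrow> a \<le> y div q ^ e \<and> y div q ^ e < a + 1"
      using qpos[of e] by (simp add: blk_def less_eq_div_iff_mult_less_eq div_less_iff_less_mult)
    then show ?thesis by linarith
  qed
  have union: "\<Union>Cs = {..<U}"
  proof (intro set_eqI iffI)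
    fix y assume "y \<in> \<Union>Cs"
    then obtain e a where ea: "(e,a) \<in> Ix" "y \<in> blk (e,a)" by (auto simp: Cs_def)
    have "y < (a+1) * q ^ e" using ea by (simp add: blk_def)
    also have "\<dots> \<le> (U div q ^ e) * q ^ e" using ea by (intro mult_right_mono) (auto simp: Ix_def)
    also have "\<dots> \<le> U" by (simp add: div_times_less_eq_dividend)
    finally show "y \<in> {..<U}" by simp
  next
    fix y assume y: "y \<in> {..<U}"
    have A0: "A 0 = U" by (simp add: A_def)
    have AL: "A (Suc L) = 0"
    proof -
      have "q ^ L < q ^ (L+1)" using q by simp
      then have "U < q ^ (L+1)" using U by linarith
      then show ?thesis by (simp add: A_def)
    qed
    define e0 where "e0 = (LEAST e. A e \<le> y)"
    have e0a: "A e0 \<le> y" unfolding e0_def by (rule LeastI[of _ "Suc L"]) (metis AL le0)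
    have e0b: "e0 \<le> Suc L" unfolding e0_def by (rule Least_le) (metis AL le0)
    have "e0 \<noteq> 0"
    proof
      assume "e0 = 0" then have "A 0 \<le> y" using e0a by simp
      then show False using y A0 by simp
    qed
    then obtain e where e: "e0 = Suc e" by (cases e0) auto
    have ye: "y < A e" using not_less_Least[of e "\<lambda>e. A e \<le> y"] e unfolding e0_def by auto
    have "e \<le> L" using e e0b by simp
    define a where "a = y div q ^ e"
    have "q ^ e * (q * (U div q ^ (e+1))) \<le> y" using e0a e by (simp add: A_def mult.assoc power_Suc2 mult.commute mult.left_commute)
    then have a1: "q * (U div q ^ (e+1)) \<le> a" unfolding a_def using qpos[of e]
      by (simp add: less_eq_div_iff_mult_less_eq mult.commute)
    have a2: "a < U div q ^ e" unfolding a_def using ye qpos[of e]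
      by (simp add: A_def div_less_iff_less_mult mult.commute)
    have "(e,a) \<in> Ix" using a1 a2 \<open>e \<le> L\<close> by (simp add: Ix_def)
    moreover have "y \<in> blk (e,a)" using mem_blk a_def by simp
    ultimately show "y \<in> \<Union>Cs" by (auto simp: Cs_def)
  qed
  have disj: "\<forall>c\<in>Cs. \<forall>c'\<in>Cs. c \<noteq> c' \<longrightarrow> c \<inter> c' = {}"
  proof (intro ballI impI)
    fix c c' assume c: "c \<in> Cs" and c': "c' \<in> Cs" and ne: "c \<noteq> c'"
    obtain e a where ea: "(e,a) \<in> Ix" "c = blk (e,a)" using c by (auto simp: Cs_def)
    obtain e' a' where ea': "(e',a') \<in> Ix" "c' = blk (e',a')" using c' by (auto simp: Cs_def)
    have key: "False" if y1: "y \<in> blk (e1,a1)" and y2: "y \<in> blk (e2,a2)" and i1: "(e1,a1) \<in> Ix"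
      and i2: "(e2,a2) \<in> Ix" and lt: "e1 < e2" for y e1 a1 e2 a2
    proof -
      have "y < (a2+1) * q ^ e2" using y2 by (simp add: blk_def)
      also have "\<dots> \<le> (U div q ^ e2) * q ^ e2" using i2 by (intro mult_right_mono) (auto simp: Ix_def)
      also have "\<dots> = A e2" by (simp add: A_def mult.commute)
      also have "\<dots> \<le> A (e1+1)" unfolding A_def using lt by (intro A_antimono) simp
      also have "\<dots> = q * (U div q ^ (e1+1)) * q ^ e1" by (simp add: A_def mult.commute mult.left_commute)
      also have "\<dots> \<le> a1 * q ^ e1" using i1 by (intro mult_right_mono) (auto simp: Ix_def)
      also have "\<dots> \<le> y" using y1 by (simp add: blk_def)
      finally show False by simp
    qed
    show "c \<inter> c' = {}"
    proof (rule ccontr)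
      assume "c \<inter> c' \<noteq> {}"
      then obtain y where y: "y \<in> blk (e,a)" "y \<in> blk (e',a')" using ea ea' by auto
      have "e = e'" using key[OF y(1) y(2) ea(1) ea'(1)] key[OF y(2) y(1) ea'(1) ea(1)]
        by (cases e e' rule: linorder_cases) auto
      moreover have "a = a'" using y mem_blk \<open>e = e'\<close> by metis
      ultimately show False using ne ea ea' by simp
    qed
  qed
  show ?thesis using cardCs union cells disj finIx unfolding Cs_def by (intro exI[of _ Cs]) (auto simp: Cs_def)
qed

lemma block_count:
  fixes C :: "'j \<Rightarrow> nat \<Rightarrow> 'f::{field,finite}" and \<psi> :: "nat \<Rightarrow> nat \<Rightarrow> 'f" and f :: "'j \<Rightarrow> 'f"
  assumes finJ: "finite J"
    and psi: "\<And>r. bij_betw (\<psi> r) {..<CARD('f)} UNIV"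
    and indep: "\<And>e::'j\<Rightarrow>'f. (\<forall>r<T. (\<Sum>l\<in>J. e l * C l r) = 0) \<Longrightarrow> \<forall>l\<in>J. e l = 0"
    and T: "T = card J + t" and RT: "T \<le> R"
  shows "card {y. y < CARD('f)^T \<and> (\<forall>l\<in>J. (\<Sum>r<R. C l r * \<psi> r (((c*CARD('f)^T + y) div CARD('f)^r) mod CARD('f))) = f l)}
          = CARD('f)^t"
proof -
  define q where "q = CARD('f)"
  have q2: "q \<ge> 2" unfolding q_def by (rule card_field_ge2)
  have qpos: "q ^ r > 0" for r using q2 by simp
  define dig where "dig y r = (y div q ^ r) mod q" for y r
  have dig_lt: "dig y r < q" for y r using q2 by (simp add: dig_def)
  have d_lo: "dig (c*q^T + y) r = dig y r" if "r < T" for y r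
  proof -
    have qT: "q ^ T = q ^ r * (q * q ^ (T - r - 1))"
      using that by (simp flip: power_add power_Suc)
    have e1: "c*q^T + y = y + q ^ r * (q * (c * q ^ (T - r - 1)))" unfolding qT by (simp add: mult_ac)
    have "(c*q^T + y) div q ^ r = q * (c * q ^ (T - r - 1)) + y div q ^ r"
      unfolding e1 using qpos[of r] by (simp only: div_mult_self2 neq0_conv[symmetric]) simp
    then show ?thesis unfolding dig_def by simp
  qed
  have d_hi: "dig (c*q^T + y) r = dig (c*q^T) r" if "y < q^T" "T \<le> r" for y r
  proof -
    have qr: "q ^ r = q ^ T * q ^ (r - T)" using that by (simp flip: power_add)
    have "(c*q^T + y) div q ^ T = c" using that qpos[of T] by (simp add: div_mult_self1 div_less)
    moreover have "(c*q^T) div q ^ T = c" using qpos[of T] by simp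
    ultimately show ?thesis unfolding dig_def qr by (simp add: div_mult2_eq)
  qed
  define h where "h l = (\<Sum>r\<in>{T..<R}. C l r * \<psi> r (dig (c*q^T) r))" for l
  have split: "(\<Sum>r<R. C l r * \<psi> r (dig (c*q^T+y) r)) = (\<Sum>r<T. C l r * \<psi> r (dig y r)) + h l"
    if y: "y < q^T" for l y
  proof -
    have "{..<R} = {..<T} \<union> {T..<R}" using RT by auto
    then have "(\<Sum>r<R. C l r * \<psi> r (dig (c*q^T+y) r))
        = (\<Sum>r\<in>{..<T} \<union> {T..<R}. C l r * \<psi> r (dig (c*q^T+y) r))" by simp
    also have "\<dots> = (\<Sum>r<T. C l r * \<psi> r (dig (c*q^T+y) r)) + (\<Sum>r\<in>{T..<R}. C l r * \<psi> r (dig (c*q^T+y) r))"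
      by (rule sum.union_disjoint) auto
    also have "(\<Sum>r<T. C l r * \<psi> r (dig (c*q^T+y) r)) = (\<Sum>r<T. C l r * \<psi> r (dig y r))"
      by (rule sum.cong) (auto simp: d_lo)
    also have "(\<Sum>r\<in>{T..<R}. C l r * \<psi> r (dig (c*q^T+y) r)) = h l"
      unfolding h_def by (rule sum.cong) (auto simp: d_hi[OF y])
    finally show ?thesis .
  qed
  define E where "E y = restrict (\<lambda>r. \<psi> r (dig y r)) {..<T}" for y
  define P where "P = PiE {..<T} (\<lambda>_. UNIV :: 'f set)"
  have injE: "inj_on E {..<q^T}"
  proof
    fix y1 y2 assume y1: "y1 \<in> {..<q^T}" and y2: "y2 \<in> {..<q^T}" and eq: "E y1 = E y2"
    have "dig y1 r = dig y2 r" if "r < T" for r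
    proof -
      have "E y1 r = E y2 r" using eq by simp
      then have "\<psi> r (dig y1 r) = \<psi> r (dig y2 r)" using that by (simp add: E_def)
      moreover have "inj_on (\<psi> r) {..<q}" using psi[of r] unfolding q_def by (simp add: bij_betw_def)
      ultimately show ?thesis using dig_lt by (meson inj_onD lessThan_iff)
    qed
    then have "(\<Sum>r<T. dig y1 r * q ^ r) = (\<Sum>r<T. dig y2 r * q ^ r)" by simp
    then show "y1 = y2" using nat_digits_repr[of y1 q T] nat_digits_repr[of y2 q T] y1 y2 q2
      unfolding dig_def by simp
  qed
  have EP: "E ` {..<q^T} = P"
  proof (rule card_subset_eq)
    show "finite P" unfolding P_def by (simp add: finite_PiE)
    show "E ` {..<q^T} \<subseteq> P" unfolding P_def E_def by (intro image_subsetI, subst restrict_PiE_iff, simp)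
    show "card (E ` {..<q^T}) = card P"
      using card_image[OF injE] unfolding P_def q_def by (simp add: card_PiE)
  qed
  define S where "S = {y. y < q^T \<and> (\<forall>l\<in>J. (\<Sum>r<R. C l r * \<psi> r (dig (c*q^T+y) r)) = f l)}"
  have S: "S = {y \<in> {..<q^T}. \<forall>l\<in>J. (\<Sum>r<T. C l r * E y r) = f l - h l}"
    unfolding S_def using split by (auto simp: E_def eq_diff_eq)
  have "E ` S = {x \<in> P. \<forall>l\<in>J. (\<Sum>r<T. C l r * x r) = f l - h l}"
    unfolding S using EP by auto
  moreover have "card (E ` S) = card S" using injE S by (intro card_image) (auto intro: inj_on_subset)
  ultimately have cS: "card S = card {x \<in> P. \<forall>l\<in>J. (\<Sum>r<T. C l r * x r) = f l - h l}" by simp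
  have "card S * q ^ card J = q ^ T"
    unfolding cS P_def q_def by (rule lin_fiber_card[OF finJ indep])
  then have "card S * q ^ card J = q ^ t * q ^ card J" unfolding T by (simp add: power_add mult.commute)
  then have "card S = q ^ t" using q2 by simp
  then show ?thesis unfolding S_def dig_def q_def .
qed

lemma card_cellset: "card {a * q ^ e ..< (a + 1) * q ^ e} = q ^ e" for a q e :: nat
  by (simp add: algebra_simps)

lemma box_gen:
  fixes Y :: "nat \<Rightarrow> nat \<Rightarrow> nat" and B :: real and q L N s :: nat
  assumes q: "q \<ge> 2" and B: "B \<ge> 0"
    and cell: "\<And>e a. (\<forall>i\<in>{1..s}. e i \<le> L \<and> a i < q^(L - e i)) \<Longrightarrow>
       \<bar>real (card {n. n < N \<and> (\<forall>i\<in>{1..s}. Y i n \<in> {a i * q^e i ..< (a i + 1) * q^e i})})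
         - real N * (\<Prod>i=1..s. real (q^e i) / real (q^L))\<bar> \<le> B"
    and fin: "finite I" and Isub: "I \<subseteq> {1..s}"
  shows "(\<forall>i\<in>{1..s}-I. cellset L q (S i)) \<Longrightarrow> (\<forall>i\<in>I. \<exists>u. u \<le> q^L \<and> S i = {..<u}) \<Longrightarrow>
     \<bar>real (card {n. n < N \<and> (\<forall>i\<in>{1..s}. Y i n \<in> S i)})
       - real N * (\<Prod>i=1..s. real (card (S i)) / real (q^L))\<bar> \<le> B * real ((L+1)*q) ^ card I"
  using fin Isub
proof (induction I arbitrary: S rule: finite_subset_induct)
  case empty
  have "\<forall>i\<in>{1..s}. \<exists>p. fst p \<le> L \<and> snd p < q ^ (L - fst p) \<and> S i = {snd p * q ^ fst p ..< (snd p + 1) * q ^ fst p}"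
    using empty.prems(1) unfolding cellset_def by force
  then obtain p where p: "\<forall>i\<in>{1..s}. fst (p i) \<le> L \<and> snd (p i) < q ^ (L - fst (p i))
      \<and> S i = {snd (p i) * q ^ fst (p i) ..< (snd (p i) + 1) * q ^ fst (p i)}"
    by metis
  define e where "e i = fst (p i)" for i
  define a where "a i = snd (p i)" for i
  have Si: "S i = {a i * q^e i ..< (a i + 1) * q^e i}" if "i \<in> {1..s}" for i
    using p that by (simp add: e_def a_def)
  have "{n. n < N \<and> (\<forall>i\<in>{1..s}. Y i n \<in> S i)} = {n. n < N \<and> (\<forall>i\<in>{1..s}. Y i n \<in> {a i * q^e i ..< (a i + 1) * q^e i})}"
    using Si by auto
  moreover have "(\<Prod>i=1..s. real (card (S i)) / real (q^L)) = (\<Prod>i=1..s. real (q^e i) / real (q^L))"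
    by (rule prod.cong) (simp_all add: Si card_cellset)
  moreover have "\<forall>i\<in>{1..s}. e i \<le> L \<and> a i < q^(L - e i)" using p by (simp add: e_def a_def)
  ultimately show ?case using cell[of e a] by simp
next
  case (insert i0 I)
  obtain u where u: "u \<le> q^L" "S i0 = {..<u}" using insert.prems(2) by auto
  obtain Cs where Cs: "finite Cs" "card Cs \<le> (L+1)*q" "\<Union>Cs = {..<u}" "\<forall>c\<in>Cs. cellset L q c"
      "\<forall>c\<in>Cs. \<forall>c'\<in>Cs. c \<noteq> c' \<longrightarrow> c \<inter> c' = {}"
    using decomp_interval[OF q u(1)] by (elim exE conjE) (rule that; assumption)
  define S' where "S' c = S(i0 := c)" for c
  define cnt where "cnt S = {n. n < N \<and> (\<forall>i\<in>{1..s}. Y i n \<in> S i)}" for S :: "nat \<Rightarrow> nat set"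
  define mn where "mn S = real N * (\<Prod>i=1..s. real (card (S i)) / real (q^L))" for S :: "nat \<Rightarrow> nat set"
  have i0: "i0 \<in> {1..s}" using insert by simp
  have IH: "\<bar>real (card (cnt (S' c))) - mn (S' c)\<bar> \<le> B * real ((L+1)*q) ^ card I" if c: "c \<in> Cs" for c
    unfolding cnt_def mn_def
  proof (rule insert.IH)
    show "\<forall>i\<in>{1..s}-I. cellset L q (S' c i)" using insert.prems(1) Cs(4) c by (auto simp: S'_def)
    show "\<forall>i\<in>I. \<exists>u. u \<le> q^L \<and> S' c i = {..<u}" using insert.prems(2) insert.hyps by (auto simp: S'_def)
  qed
  have cnt_eq: "cnt S = (\<Union>c\<in>Cs. cnt (S' c))"
  proof (intro set_eqI iffI)
    fix n assume "n \<in> cnt S"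
    then have n: "n < N" "\<forall>i\<in>{1..s}. Y i n \<in> S i" by (auto simp: cnt_def)
    then have "Y i0 n \<in> S i0" using i0 by blast
    then obtain c where c: "c \<in> Cs" "Y i0 n \<in> c" using u(2) Cs(3) by auto
    have "n \<in> cnt (S' c)" using n c by (auto simp: cnt_def S'_def)
    then show "n \<in> (\<Union>c\<in>Cs. cnt (S' c))" using c by auto
  next
    fix n assume "n \<in> (\<Union>c\<in>Cs. cnt (S' c))"
    then obtain c where c: "c \<in> Cs" "n \<in> cnt (S' c)" by auto
    then have n: "n < N" "\<forall>i\<in>{1..s}. Y i n \<in> S' c i" by (auto simp: cnt_def)
    have "Y i0 n \<in> S' c i0" using n(2) i0 by blast
    then have "Y i0 n \<in> c" by (simp add: S'_def)
    then have "Y i0 n \<in> S i0" using c(1) u(2) Cs(3) by auto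
    moreover have "\<forall>i\<in>{1..s}. i \<noteq> i0 \<longrightarrow> Y i n \<in> S i" using n(2) by (auto simp: S'_def)
    ultimately show "n \<in> cnt S" using n(1) unfolding cnt_def by auto
  qed
  have "card (cnt S) = (\<Sum>c\<in>Cs. card (cnt (S' c)))"
    unfolding cnt_eq
  proof (rule card_UN_disjoint[OF Cs(1)])
    show "\<forall>c\<in>Cs. finite (cnt (S' c))" by (auto simp: cnt_def)
    show "\<forall>c\<in>Cs. \<forall>c'\<in>Cs. c \<noteq> c' \<longrightarrow> cnt (S' c) \<inter> cnt (S' c') = {}"
      using Cs(5) i0 unfolding cnt_def S'_def by fastforce
  qed
  moreover have "mn S = (\<Sum>c\<in>Cs. mn (S' c))"
  proof -
    have cu: "card (S i0) = (\<Sum>c\<in>Cs. card c)"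
    proof -
      have "card (\<Union>Cs) = sum card Cs"
      proof (rule card_Union_disjoint)
        show "pairwise disjnt Cs" using Cs(5) by (auto simp: pairwise_def disjnt_def)
        show "\<And>A. A \<in> Cs \<Longrightarrow> finite A" using Cs(3) by (metis Union_upper finite_lessThan finite_subset)
      qed
      then show ?thesis using Cs(3) u(2) by simp
    qed
    define R where "R S = (\<Prod>i\<in>{1..s}-{i0}. real (card (S i)) / real (q^L))" for S :: "nat \<Rightarrow> nat set"
    have mnS: "mn S = real N * (real (card (S i0)) / real (q^L)) * R S" for S
      unfolding mn_def R_def using i0 by (simp add: prod.remove mult.assoc)
    have RS: "R (S' c) = R S" for c unfolding R_def S'_def by (rule prod.cong) auto
    have "mn S = real N * (real (\<Sum>c\<in>Cs. card c) / real (q^L)) * R S" using mnS cu by simp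
    also have "\<dots> = (\<Sum>c\<in>Cs. real N * (real (card c) / real (q^L)) * R S)"
      by (simp add: sum_distrib_left sum_distrib_right sum_divide_distrib)
    also have "\<dots> = (\<Sum>c\<in>Cs. mn (S' c))"
    proof (rule sum.cong[OF refl])
      fix c assume "c \<in> Cs"
      have "S' c i0 = c" by (simp add: S'_def)
      then show "real N * (real (card c) / real (q^L)) * R S = mn (S' c)"
        by (simp only: mnS RS)
    qed
    finally show ?thesis .
  qed
  ultimately have "real (card (cnt S)) - mn S = (\<Sum>c\<in>Cs. real (card (cnt (S' c))) - mn (S' c))"
    by (simp add: sum_subtractf)
  then have "\<bar>real (card (cnt S)) - mn S\<bar> \<le> (\<Sum>c\<in>Cs. \<bar>real (card (cnt (S' c))) - mn (S' c)\<bar>)"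
    by (simp add: sum_abs)
  also have "\<dots> \<le> (\<Sum>c\<in>Cs. B * real ((L+1)*q) ^ card I)" by (rule sum_mono) (rule IH)
  also have "\<dots> = real (card Cs) * (B * real ((L+1)*q) ^ card I)" by simp
  also have "\<dots> \<le> real ((L+1)*q) * (B * real ((L+1)*q) ^ card I)"
  proof (rule mult_right_mono)
    show "real (card Cs) \<le> real ((L+1)*q)" using Cs(2) by (simp only: of_nat_le_iff)
    show "0 \<le> B * real ((L+1)*q) ^ card I" using B by simp
  qed
  also have "\<dots> = B * real ((L+1)*q) ^ card (insert i0 I)" using insert.hyps by simp
  finally show ?case unfolding cnt_def mn_def .
qed

lemma box_count:
  fixes Y :: "nat \<Rightarrow> nat \<Rightarrow> nat" and B :: real and q L N s :: nat
  assumes q: "q \<ge> 2" and B: "B \<ge> 0"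
    and cell: "\<And>e a. (\<forall>i\<in>{1..s}. e i \<le> L \<and> a i < q^(L - e i)) \<Longrightarrow>
       \<bar>real (card {n. n < N \<and> (\<forall>i\<in>{1..s}. Y i n \<in> {a i * q^e i ..< (a i + 1) * q^e i})})
         - real N * (\<Prod>i=1..s. real (q^e i) / real (q^L))\<bar> \<le> B"
    and U: "\<forall>i\<in>{1..s}. U i \<le> q^L"
  shows "\<bar>real (card {n. n < N \<and> (\<forall>i\<in>{1..s}. Y i n < U i)})
       - real N * (\<Prod>i=1..s. real (U i) / real (q^L))\<bar> \<le> B * real ((L+1)*q) ^ s"
  using box_gen[OF q B cell, of "{1..s}" "\<lambda>i. {..<U i}"] U by simp

lemma mod_pow_digit:
  fixes x q R r :: nat assumes "r < R" "q \<ge> 2"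
  shows "((x mod q ^ R) div q ^ r) mod q = (x div q ^ r) mod q"
proof -
  have qr: "q ^ R = q ^ r * (q * q ^ (R - r - 1))"
    using assms by (simp flip: power_add power_Suc)
  have x: "x = x mod q ^ R + q ^ r * (q * (q ^ (R - r - 1) * (x div q ^ R)))"
    using div_mult_mod_eq[of x "q^R"] unfolding qr by (simp add: mult_ac)
  have pos: "q ^ r \<noteq> 0" using assms by simp
  have "x div q ^ r = (x mod q ^ R) div q ^ r + q * (q ^ (R - r - 1) * (x div q ^ R))"
    by (subst x) (simp only: div_mult_self2[OF pos] add.commute)
  then show ?thesis by simp
qed

lemma seq_digits:
  fixes q v n rho w R :: nat and a b \<alpha> :: "nat \<Rightarrow> nat"
  assumes q2: "q \<ge> 2" and cop: "coprime v q"
    and dn: "is_qadic_seq_term q v \<alpha> n a" and dr: "is_qadic_seq_term q v \<alpha> rho b"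
    and n: "n = v * w + rho" and r: "r < R"
  shows "a r = (((\<Sum>r<R. b r * q^r) + w) div q^r) mod q"
proof -
  define A where "A = (\<Sum>r<R. a r * q^r)"
  define Bn where "Bn = (\<Sum>r<R. b r * q^r)"
  have ta: "qadic_trunc q a R = int A" unfolding qadic_trunc_def A_def by simp
  have tb: "qadic_trunc q b R = int Bn" unfolding qadic_trunc_def Bn_def by simp
  have c1: "[int v * (int A - qadic_trunc q \<alpha> R) = int n] (mod int q ^ R)"
    using dn ta unfolding is_qadic_seq_term_def by metis
  have c2: "[int v * (int Bn - qadic_trunc q \<alpha> R) = int rho] (mod int q ^ R)"
    using dr tb unfolding is_qadic_seq_term_def by metis
  have "[int v * (int A - qadic_trunc q \<alpha> R) - int v * (int Bn - qadic_trunc q \<alpha> R) = int n - int rho] (mod int q ^ R)"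
    by (rule cong_diff[OF c1 c2])
  then have "[int v * (int A - int Bn) = int v * int w] (mod int q ^ R)"
    using n by (simp add: algebra_simps)
  moreover have "coprime (int v) (int q ^ R)" using cop by simp
  ultimately have "[int A - int Bn = int w] (mod int q ^ R)" using cong_mult_lcancel by blast
  from cong_add[OF this cong_refl[of "int Bn"]]
  have "[int A = int (Bn + w)] (mod int (q ^ R))"
    by (simp add: algebra_simps)
  then have "[A = Bn + w] (mod q ^ R)" by (simp only: cong_int_iff)
  then have "A = (Bn + w) mod q ^ R"
  proof -
    assume h: "[A = Bn + w] (mod q ^ R)"
    have "A < q ^ R" unfolding A_def using dn q2
      by (intro digsum_lt) (auto simp: is_qadic_seq_term_def qadic_digits_def)
    then show ?thesis using h by (simp add: cong_def)
  qed
  have "a r = (A div q ^ r) mod q" unfolding A_def using dn r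
    by (intro digsum_digit[symmetric]) (auto simp: is_qadic_seq_term_def qadic_digits_def)
  also have "\<dots> = ((Bn + w) div q ^ r) mod q"
    unfolding \<open>A = (Bn + w) mod q ^ R\<close> using mod_pow_digit[OF r q2] .
  finally show ?thesis unfolding Bn_def .
qed

lemma down_closed_nat:
  fixes S :: "nat set"
  assumes fin: "finite S" and dc: "\<And>x y. x \<in> S \<Longrightarrow> y \<le> x \<Longrightarrow> y \<in> S"
  shows "S = {..<card S}"
proof (cases "S = {}")
  case True then show ?thesis by simp
next
  case False
  define m where "m = Max S"
  have "S = {..m}"
  proof
    show "S \<subseteq> {..m}" using fin by (auto simp: m_def)
    show "{..m} \<subseteq> S" using dc Max_in[OF fin False] by (auto simp: m_def)
  qed
  then show ?thesis by auto
qed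

lemma seq_cell_count:
  fixes s t v N :: nat and C :: "nat \<Rightarrow> nat \<Rightarrow> nat \<Rightarrow> 'f::{field,finite}"
    and \<psi> :: "nat \<Rightarrow> nat \<Rightarrow> 'f" and lam :: "nat \<Rightarrow> nat \<Rightarrow> 'f \<Rightarrow> nat"
    and \<alpha> :: "nat \<Rightarrow> nat" and sd :: "nat \<Rightarrow> nat \<Rightarrow> nat" and k :: "nat \<Rightarrow> nat" and \<pi> :: "nat \<Rightarrow> nat \<Rightarrow> nat"
  assumes finite_row: "\<forall>i\<in>{1..s}. \<forall>j\<ge>1. finite {r. C i j r \<noteq> 0}"
    and lin_indep: "\<forall>m>t. \<forall>d::nat\<Rightarrow>nat.
          1 \<le> (\<Sum>i=1..s. d i) \<and> (\<Sum>i=1..s. d i) \<le> m - t \<longrightarrow>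
          (\<forall>e::nat\<Rightarrow>nat\<Rightarrow>'f.
             (\<forall>r<m. (\<Sum>i=1..s. \<Sum>j=1..d i. e i j * C i j r) = 0) \<longrightarrow>
             (\<forall>i\<in>{1..s}. \<forall>j\<in>{1..d i}. e i j = 0))"
    and psi_bij: "\<forall>r. bij_betw (\<psi> r) {..<CARD('f)} (UNIV :: 'f set)"
    and lambda_bij: "\<forall>i\<in>{1..s}. \<forall>j\<ge>1. bij_betw (lam i j) (UNIV :: 'f set) {..<CARD('f)}"
    and v_pos: "1 \<le> v"
    and v_coprime: "coprime v CARD('f)"
    and sd_def: "\<forall>n. is_qadic_seq_term CARD('f) v \<alpha> n (sd n)"
    and pi: "\<forall>i\<in>{1..s}. \<forall>j\<in>{1..k i}. \<pi> i j < CARD('f)"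
  shows "\<bar>real (card {n. n < N \<and> (\<forall>i\<in>{1..s}. \<forall>j\<in>{1..k i}.
            lam i j (\<Sum>r\<in>{r. C i j r \<noteq> 0}. C i j r * \<psi> r (sd n r)) = \<pi> i j)})
          - real N / real CARD('f) ^ (\<Sum>i=1..s. k i)\<bar> \<le> 2 * real v * real CARD('f) ^ t"
proof -
  define q where "q = CARD('f)"
  have q2: "q \<ge> 2" unfolding q_def by (rule card_field_ge2)
  define J where "J = Sigma {1..s} (\<lambda>i. {1..k i})"
  have finJ: "finite J" unfolding J_def by auto
  have cardJ: "card J = (\<Sum>i=1..s. k i)" unfolding J_def by simp
  define K where "K = card J"
  define T where "T = K + t"
  have finU: "finite (\<Union>l\<in>J. {r. C (fst l) (snd l) r \<noteq> 0})"
    using finJ finite_row by (auto simp: J_def)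
  obtain R0 where R0: "(\<Union>l\<in>J. {r. C (fst l) (snd l) r \<noteq> 0}) \<subseteq> {..<R0}"
    using finite_nat_bounded[OF finU] by blast
  define R where "R = max R0 T"
  have RT: "T \<le> R" by (simp add: R_def)
  have supp: "{r. C (fst l) (snd l) r \<noteq> 0} \<subseteq> {..<R}" if "l \<in> J" for l
    using R0 that unfolding R_def by fastforce
  define f where "f l = inv_into UNIV (lam (fst l) (snd l)) (\<pi> (fst l) (snd l))" for l
  define \<Phi> where "\<Phi> z = (\<forall>l\<in>J. (\<Sum>r<R. C (fst l) (snd l) r * \<psi> r ((z div q^r) mod q)) = f l)" for z
  define P where "P n = (\<forall>i\<in>{1..s}. \<forall>j\<in>{1..k i}.
            lam i j (\<Sum>r\<in>{r. C i j r \<noteq> 0}. C i j r * \<psi> r (sd n r)) = \<pi> i j)" for n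
  have lam_iff: "lam (fst l) (snd l) x = \<pi> (fst l) (snd l) \<longleftrightarrow> x = f l" if l: "l \<in> J" for l x
  proof -
    have b: "bij_betw (lam (fst l) (snd l)) UNIV {..<q}"
      using lambda_bij l unfolding J_def q_def by auto
    have pl: "\<pi> (fst l) (snd l) \<in> range (lam (fst l) (snd l))"
      using pi l b unfolding J_def q_def bij_betw_def by auto
    show ?thesis
    proof
      assume "lam (fst l) (snd l) x = \<pi> (fst l) (snd l)"
      then show "x = f l" unfolding f_def using b by (metis bij_betw_def inv_into_f_f UNIV_I)
    next
      assume "x = f l"
      then show "lam (fst l) (snd l) x = \<pi> (fst l) (snd l)" unfolding f_def using pl by (simp add: f_inv_into_f)
    qed
  qed
  have sum_supp: "(\<Sum>r\<in>{r. C (fst l) (snd l) r \<noteq> 0}. C (fst l) (snd l) r * \<psi> r (a r))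
      = (\<Sum>r<R. C (fst l) (snd l) r * \<psi> r (a r))" if l: "l \<in> J" for l a
    by (rule sum.mono_neutral_left) (use supp[OF l] in auto)
  have P_iff: "P n \<longleftrightarrow> (\<forall>l\<in>J. (\<Sum>r<R. C (fst l) (snd l) r * \<psi> r (sd n r)) = f l)" for n
  proof -
    have "P n \<longleftrightarrow> (\<forall>l\<in>J. lam (fst l) (snd l) (\<Sum>r\<in>{r. C (fst l) (snd l) r \<noteq> 0}. C (fst l) (snd l) r * \<psi> r (sd n r))
        = \<pi> (fst l) (snd l))"
      unfolding P_def J_def by auto
    also have "\<dots> \<longleftrightarrow> (\<forall>l\<in>J. (\<Sum>r<R. C (fst l) (snd l) r * \<psi> r (sd n r)) = f l)"
      using lam_iff sum_supp by auto
    finally show ?thesis .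
  qed
  have indep: "\<forall>l\<in>J. e l = 0" if h: "\<forall>r<T. (\<Sum>l\<in>J. e l * C (fst l) (snd l) r) = 0" for e :: "nat \<times> nat \<Rightarrow> 'f"
  proof (cases "K = 0")
    case True
    then have "J = {}" using finJ by (simp add: K_def)
    then show ?thesis by simp
  next
    case False
    have sK: "(\<Sum>i=1..s. k i) = K" by (simp add: K_def cardJ)
    have hT: "\<forall>r<T. (\<Sum>i=1..s. \<Sum>j=1..k i. e (i,j) * C i j r) = 0"
    proof (intro allI impI)
      fix r assume "r < T"
      have "(\<Sum>i=1..s. \<Sum>j=1..k i. e (i,j) * C i j r) = (\<Sum>l\<in>J. e l * C (fst l) (snd l) r)"
        unfolding J_def by (subst sum.Sigma) (auto intro!: sum.cong simp: split_beta)
      then show "(\<Sum>i=1..s. \<Sum>j=1..k i. e (i,j) * C i j r) = 0" using h \<open>r < T\<close> by simp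
    qed
    have Tt: "T > t" and kk: "1 \<le> (\<Sum>i=1..s. k i) \<and> (\<Sum>i=1..s. k i) \<le> T - t"
      using False sK by (auto simp: T_def)
    note l1 = mp[OF spec[OF lin_indep, of T] Tt]
    note l2 = mp[OF spec[OF l1, of k] kk]
    note l3 = spec[OF l2, of "\<lambda>i j. e (i,j)"]
    have "\<forall>i\<in>{1..s}. \<forall>j\<in>{1..k i}. (\<lambda>i j. e (i,j)) i j = 0"
      using l3 hT by (rule mp)
    then show ?thesis unfolding J_def by auto
  qed
  have blk: "card {y. y < q^T \<and> \<Phi> (c*q^T + y)} = q^t" for c
    unfolding \<Phi>_def q_def
    by (rule block_count[where C = "\<lambda>l r. C (fst l) (snd l) r", OF finJ _ _ _ RT])
       (use psi_bij indep in \<open>auto simp: T_def K_def\<close>)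
  define z0 where "z0 rho = (\<Sum>r<R. sd rho r * q^r)" for rho
  have Pw: "P (v * w + rho) \<longleftrightarrow> \<Phi> (z0 rho + w)" for w rho
  proof -
    have "sd (v * w + rho) r = ((z0 rho + w) div q^r) mod q" if "r < R" for r
      unfolding z0_def
      by (rule seq_digits[OF q2 _ _ _ refl that]) (use v_coprime sd_def in \<open>auto simp: q_def\<close>)
    then show ?thesis unfolding P_iff \<Phi>_def by simp
  qed
  define W where "W rho = card {w. v * w + rho < N}" for rho
  have Wset: "{w. v * w + rho < N} = {..<W rho}" for rho
    unfolding W_def
  proof (rule down_closed_nat)
    show "finite {w. v * w + rho < N}"
    proof (rule finite_subset[of _ "{..<N}"])
      show "{w. v * w + rho < N} \<subseteq> {..<N}"
      proof
        fix w assume "w \<in> {w. v * w + rho < N}"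
        then have a: "v * w + rho < N" by simp
        have b: "w \<le> v * w" using v_pos by simp
        from a b have "w < N" by linarith
        then show "w \<in> {..<N}" by simp
      qed
    qed simp
    show "\<And>x y. x \<in> {w. v * w + rho < N} \<Longrightarrow> y \<le> x \<Longrightarrow> y \<in> {w. v * w + rho < N}"
    proof -
      fix x y assume "x \<in> {w. v * w + rho < N}" "y \<le> x"
      then have a: "v * y + rho \<le> v * x + rho" and b: "v * x + rho < N" by auto
      from a b have "v * y + rho < N" by (rule le_less_trans)
      then show "y \<in> {w. v * w + rho < N}" by simp
    qed
  qed
  have img: "{n. (n < N \<and> X n) \<and> n mod v = rho} = (\<lambda>w. v * w + rho) ` {w. w < W rho \<and> X (v * w + rho)}"
    if rho: "rho < v" for rho and X :: "nat \<Rightarrow> bool"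
  proof (intro set_eqI iffI)
    fix n assume n: "n \<in> {n. (n < N \<and> X n) \<and> n mod v = rho}"
    have e: "n = v * (n div v) + rho" using n div_mult_mod_eq[of n v] by (simp add: mult.commute)
    have "n div v \<in> {w. v * w + rho < N}" using n e by (metis mem_Collect_eq)
    then have "n div v < W rho" using Wset by auto
    then show "n \<in> (\<lambda>w. v * w + rho) ` {w. w < W rho \<and> X (v * w + rho)}"
      using n e by (metis (mono_tags, lifting) image_eqI mem_Collect_eq)
  next
    fix n assume "n \<in> (\<lambda>w. v * w + rho) ` {w. w < W rho \<and> X (v * w + rho)}"
    then obtain w where w: "n = v * w + rho" "w < W rho" "X (v * w + rho)" by auto
    have "v * w + rho < N" using w(2) Wset by auto
    then show "n \<in> {n. (n < N \<and> X n) \<and> n mod v = rho}" using w rho by simp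
  qed
  have injw: "inj (\<lambda>w. v * w + rho)" for rho using v_pos by (auto simp: inj_def)
  have cnt_rho: "card {n. (n < N \<and> X n) \<and> n mod v = rho} = card {w. w < W rho \<and> X (v * w + rho)}"
    if "rho < v" for rho and X :: "nat \<Rightarrow> bool"
    unfolding img[OF that] by (rule card_image) (rule inj_on_subset[OF injw[of rho]], simp)
  have split: "card {n. n < N \<and> X n} = (\<Sum>rho<v. card {n. (n < N \<and> X n) \<and> n mod v = rho})"
    for X :: "nat \<Rightarrow> bool"
  proof -
    have "card {n. n < N \<and> X n} = (\<Sum>rho\<in>{..<v}. card {n\<in>{n. n < N \<and> X n}. n mod v = rho})"
      by (rule card_partition_fun) (use v_pos in auto)
    then show ?thesis by simp
  qed
  have cntP: "card {n. n < N \<and> P n} = (\<Sum>rho<v. card {w. w < W rho \<and> \<Phi> (z0 rho + w)})"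
    unfolding split[of P]
  proof (rule sum.cong[OF refl])
    fix rho assume "rho \<in> {..<v}"
    then have r: "rho < v" by simp
    show "card {n. (n < N \<and> P n) \<and> n mod v = rho} = card {w. w < W rho \<and> \<Phi> (z0 rho + w)}"
      by (simp only: cnt_rho[OF r] Pw)
  qed
  have sumW: "N = (\<Sum>rho<v. W rho)"
  proof -
    have "N = card {n. n < N \<and> True}" by simp
    also have "\<dots> = (\<Sum>rho<v. card {w. w < W rho \<and> True})"
      unfolding split[of "\<lambda>_. True"]
    proof (rule sum.cong[OF refl])
      fix rho assume "rho \<in> {..<v}"
      then have r: "rho < v" by simp
      show "card {n. (n < N \<and> True) \<and> n mod v = rho} = card {w. w < W rho \<and> True}"
        by (simp only: cnt_rho[OF r])
    qed
    finally show ?thesis by simp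
  qed
  have qT: "real q ^ T > 0" using q2 by simp
  have each: "\<bar>real (card {w. w < W rho \<and> \<Phi> (z0 rho + w)}) - real (W rho) / real q ^ K\<bar> \<le> 2 * real q ^ t" for rho
  proof -
    have "\<bar>real (card {w. w < W rho \<and> \<Phi> (z0 rho + w)}) - real (W rho) * real (q^t) / real (q^T)\<bar> \<le> 2 * real (q^t)"
      using interval_count[OF blk, of "W rho" "z0 rho"] q2 by simp
    moreover have "real (W rho) * real (q^t) / real (q^T) = real (W rho) / real q ^ K"
      using q2 by (simp add: T_def power_add field_simps)
    ultimately show ?thesis by simp
  qed
  have "real (card {n. n < N \<and> P n}) - real N / real q ^ K
      = (\<Sum>rho<v. real (card {w. w < W rho \<and> \<Phi> (z0 rho + w)}) - real (W rho) / real q ^ K)"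
  proof -
    have e1: "real (card {n. n < N \<and> P n}) = (\<Sum>rho<v. real (card {w. w < W rho \<and> \<Phi> (z0 rho + w)}))"
      unfolding cntP by simp
    have e2: "real N / real q ^ K = (\<Sum>rho<v. real (W rho) / real q ^ K)"
      by (subst sumW) (simp add: sum_divide_distrib)
    show ?thesis unfolding e1 e2 by (simp add: sum_subtractf)
  qed
  then have "\<bar>real (card {n. n < N \<and> P n}) - real N / real q ^ K\<bar>
      \<le> (\<Sum>rho<v. \<bar>real (card {w. w < W rho \<and> \<Phi> (z0 rho + w)}) - real (W rho) / real q ^ K\<bar>)"
    by (simp add: sum_abs)
  also have "\<dots> \<le> (\<Sum>rho<v. 2 * real q ^ t)" by (rule sum_mono) (rule each)
  also have "\<dots> = 2 * real v * real q ^ t" by simp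
  finally show ?thesis unfolding P_def K_def cardJ q_def .
qed

lemma digit_series:
  fixes d :: "nat \<Rightarrow> nat" and q L :: nat
  assumes q: "q \<ge> 2" and dq: "\<And>j. d (Suc j) < q"
  defines "x \<equiv> (\<Sum>j. real (d (Suc j)) / real q ^ Suc j)"
  shows "real (\<Sum>r<L. d (L - r) * q ^ r) / real q ^ L \<le> x"
    and "x \<le> (real (\<Sum>r<L. d (L - r) * q ^ r) + 1) / real q ^ L"
proof -
  define f where "f j = real (d (Suc j)) / real q ^ Suc j" for j
  have qr: "real q \<ge> 2" using q by simp
  have f0: "f j \<ge> 0" for j by (simp add: f_def)
  have fle: "f j \<le> (real q - 1) / real q ^ Suc j" for j
  proof -
    have "real (d (Suc j)) \<le> real q - 1" using dq[of j] by (simp add: of_nat_diff)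
    then show ?thesis unfolding f_def using qr by (intro divide_right_mono) auto
  qed
  define g where "g j = ((real q - 1) / real q) * (1 / real q) ^ j" for j
  have fg: "(real q - 1) / real q ^ Suc j = g j" for j
    unfolding g_def by (simp add: power_divide field_simps)
  have gs0: "g sums (((real q - 1) / real q) * (1 / (1 - 1 / real q)))"
    unfolding g_def by (intro sums_mult geometric_sums) (use qr in simp)
  have gval: "((real q - 1) / real q) * (1 / (1 - 1 / real q)) = 1" using qr by (simp add: field_simps)
  have gs: "g sums 1" using gs0 unfolding gval .
  have sg: "summable g" using gs by (rule sums_summable)
  have sf: "summable f" by (rule summable_comparison_test'[OF sg, of 0]) (use f0 fle fg in auto)
  have split: "x = (\<Sum>n. f (n + L)) + (\<Sum>j<L. f j)"
    unfolding x_def f_def[symmetric] by (rule suminf_split_initial_segment[OF sf])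
  have head: "(\<Sum>j<L. f j) = real (\<Sum>r<L. d (L - r) * q ^ r) / real q ^ L"
  proof -
    have "real (\<Sum>r<L. d (L - r) * q ^ r) / real q ^ L = (\<Sum>r<L. real (d (L - r)) * real q ^ r / real q ^ L)"
      by (simp add: sum_divide_distrib)
    also have "\<dots> = (\<Sum>j<L. real (d (L - (L - Suc j))) * real q ^ (L - Suc j) / real q ^ L)"
      by (rule sum.nat_diff_reindex[symmetric])
    also have "\<dots> = (\<Sum>j<L. f j)"
    proof (rule sum.cong[OF refl])
      fix j assume "j \<in> {..<L}"
      then have jL: "j < L" by simp
      have e1: "L - (L - Suc j) = Suc j" using jL by simp
      have Ls: "L = (L - Suc j) + Suc j" using jL by simp
      have e2: "real q ^ L = real q ^ (L - Suc j) * real q ^ Suc j" by (subst Ls) (simp only: power_add)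
      show "real (d (L - (L - Suc j))) * real q ^ (L - Suc j) / real q ^ L = f j"
        unfolding e1 e2 f_def using qr by (simp add: field_simps)
    qed
    finally show ?thesis by simp
  qed
  have tail0: "(\<Sum>n. f (n + L)) \<ge> 0"
    by (rule suminf_nonneg) (use summable_ignore_initial_segment[OF sf, of L] f0 in auto)
  have tail1: "(\<Sum>n. f (n + L)) \<le> 1 / real q ^ L"
  proof -
    have "(\<lambda>n. g (n + L)) sums ((1 / real q) ^ L * 1)"
    proof -
      have "(\<lambda>n. (1 / real q) ^ L * g n) sums ((1 / real q) ^ L * 1)" using gs by (intro sums_mult)
      moreover have "(1 / real q) ^ L * g n = g (n + L)" for n unfolding g_def by (simp add: power_add field_simps)
      ultimately show ?thesis by simp
    qed
    then have "(\<Sum>n. g (n + L)) = 1 / real q ^ L" by (simp add: sums_iff power_one_over)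
    moreover have "(\<Sum>n. f (n + L)) \<le> (\<Sum>n. g (n + L))"
      by (rule suminf_le) (use fle fg summable_ignore_initial_segment[OF sf, of L]
           summable_ignore_initial_segment[OF sg, of L] in auto)
    ultimately show ?thesis by simp
  qed
  show "real (\<Sum>r<L. d (L - r) * q ^ r) / real q ^ L \<le> x" using split head tail0 by simp
  show "x \<le> (real (\<Sum>r<L. d (L - r) * q ^ r) + 1) / real q ^ L"
    using split head tail1 by (simp add: add_divide_distrib)
qed

lemma prefix_digits:
  fixes Y a e L q :: nat
  assumes q: "q \<ge> 2" and Y: "Y < q ^ L" and a: "a < q ^ (L - e)" and e: "e \<le> L"
  shows "Y div q ^ e = a \<longleftrightarrow> (\<forall>r. e \<le> r \<and> r < L \<longrightarrow> (Y div q ^ r) mod q = (a div q ^ (r - e)) mod q)"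
proof
  assume h: "Y div q ^ e = a"
  show "\<forall>r. e \<le> r \<and> r < L \<longrightarrow> (Y div q ^ r) mod q = (a div q ^ (r - e)) mod q"
  proof (intro allI impI)
    fix r assume "e \<le> r \<and> r < L"
    then have "q ^ r = q ^ e * q ^ (r - e)" by (simp flip: power_add)
    then show "(Y div q ^ r) mod q = (a div q ^ (r - e)) mod q" using h by (simp add: div_mult2_eq)
  qed
next
  assume h: "\<forall>r. e \<le> r \<and> r < L \<longrightarrow> (Y div q ^ r) mod q = (a div q ^ (r - e)) mod q"
  define Z where "Z = Y div q ^ e"
  have Zlt: "Z < q ^ (L - e)"
  proof -
    have "q ^ L = q ^ (L - e) * q ^ e" using e by (simp flip: power_add)
    then show ?thesis unfolding Z_def using Y q by (simp add: div_less_iff_less_mult)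
  qed
  have dig: "(Z div q ^ m) mod q = (a div q ^ m) mod q" if "m < L - e" for m
  proof -
    have "q ^ (e + m) = q ^ e * q ^ m" by (simp add: power_add)
    then have "Z div q ^ m = Y div q ^ (e + m)" unfolding Z_def by (simp add: div_mult2_eq)
    moreover have "(Y div q ^ (e + m)) mod q = (a div q ^ (e + m - e)) mod q" using h that by auto
    ultimately show ?thesis by simp
  qed
  have "Z = (\<Sum>m<L - e. ((Z div q ^ m) mod q) * q ^ m)" by (rule nat_digits_repr[OF Zlt q])
  also have "\<dots> = (\<Sum>m<L - e. ((a div q ^ m) mod q) * q ^ m)" by (rule sum.cong) (auto simp: dig)
  also have "\<dots> = a" by (rule nat_digits_repr[OF a q, symmetric])
  finally show "Y div q ^ e = a" unfolding Z_def .
qed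

lemma box_sandwich:
  fixes x :: "nat \<Rightarrow> nat \<Rightarrow> real" and Y :: "nat \<Rightarrow> nat \<Rightarrow> nat" and q L N s :: nat
    and E :: real and b :: "nat \<Rightarrow> real"
  assumes q: "q \<ge> 2" and N: "0 < N" and NL: "N \<le> q ^ L"
    and xb: "\<And>n i. i \<in> {1..s} \<Longrightarrow> real (Y i n) / real q ^ L \<le> x n i \<and> x n i \<le> (real (Y i n) + 1) / real q ^ L"
    and box: "\<And>U. \<forall>i\<in>{1..s}. U i \<le> q ^ L \<Longrightarrow>
        \<bar>real (card {n. n < N \<and> (\<forall>i\<in>{1..s}. Y i n < U i)}) - real N * (\<Prod>i=1..s. real (U i) / real (q ^ L))\<bar> \<le> E"
    and b: "\<forall>i\<in>{1..s}. 0 \<le> b i \<and> b i \<le> 1"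
  shows "\<bar>real (card {n. n < N \<and> (\<forall>i\<in>{1..s}. x n i < b i)}) / real N - (\<Prod>i=1..s. b i)\<bar> \<le> (E + real s) / real N"
proof -
  define Q where "Q = real q ^ L"
  have Qpos: "Q > 0" using q by (simp add: Q_def)
  have QN: "real N \<le> Q" using NL unfolding Q_def by (metis of_nat_le_iff of_nat_power)
  have Qe: "real (q ^ L) = Q" by (simp add: Q_def)
  define U where "U i = nat \<lceil>b i * Q\<rceil>" for i
  define V where "V i = U i - 1" for i
  have bQ: "0 \<le> b i * Q" "b i * Q \<le> Q" if "i \<in> {1..s}" for i
    using b that Qpos by (auto intro: mult_le_cancel_right1[THEN iffD2])
  have U_real: "real (U i) = of_int \<lceil>b i * Q\<rceil>" if "i \<in> {1..s}" for i
    using bQ[OF that] unfolding U_def by simp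
  have U_le: "U i \<le> q ^ L" if i: "i \<in> {1..s}" for i
  proof -
    have "real (U i) \<le> Q"
    proof -
      have "of_int \<lceil>b i * Q\<rceil> \<le> Q"
        using bQ[OF i] by (metis Qe ceiling_le_iff of_int_of_nat_eq of_int_le_iff)
      then show ?thesis using U_real[OF i] by simp
    qed
    then show ?thesis unfolding Q_def by (metis of_nat_le_iff of_nat_power)
  qed
  have V_le: "V i \<le> q ^ L" if "i \<in> {1..s}" for i using U_le[OF that] by (simp add: V_def)
  have Ub: "\<bar>real (U i) / Q - b i\<bar> \<le> 1 / Q" if i: "i \<in> {1..s}" for i
  proof -
    have "b i * Q \<le> real (U i)" "real (U i) < b i * Q + 1" using U_real[OF i] by linarith+
    then have "b i \<le> real (U i) / Q" "real (U i) / Q \<le> b i + 1 / Q" using Qpos by (simp_all add: field_simps)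
    then show ?thesis by (simp add: abs_le_iff)
  qed
  have Vb: "\<bar>real (V i) / Q - b i\<bar> \<le> 1 / Q" if i: "i \<in> {1..s}" for i
  proof (cases "U i = 0")
    case True
    then have "\<lceil>b i * Q\<rceil> \<le> 0" using U_real[OF i] by simp
    then have "b i * Q \<le> 0" by linarith
    moreover have "0 \<le> b i" using b i by simp
    ultimately have "b i = 0" using Qpos by (simp add: mult_le_0_iff)
    then show ?thesis using True Qpos by (simp add: V_def)
  next
    case False
    then have "real (V i) = real (U i) - 1" by (simp add: V_def of_nat_diff)
    moreover have "b i * Q \<le> real (U i)" "real (U i) < b i * Q + 1" using U_real[OF i] by linarith+
    ultimately have v1: "b i * Q - 1 \<le> real (V i)" and v2: "real (V i) \<le> b i * Q" by linarith+
    have "(b i * Q - 1) / Q \<le> real (V i) / Q" using v1 Qpos by (simp add: divide_right_mono)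
    moreover have "(b i * Q - 1) / Q = b i - 1 / Q" using Qpos by (simp add: field_simps)
    moreover have "real (V i) / Q \<le> b i" using v2 Qpos by (simp add: divide_le_eq)
    ultimately have "b i - 1 / Q \<le> real (V i) / Q" "real (V i) / Q \<le> b i" using Qpos by simp_all
    then show ?thesis by (simp add: abs_le_iff)
  qed
  have prod_bound: "\<bar>(\<Prod>i=1..s. real (W i) / Q) - (\<Prod>i=1..s. b i)\<bar> \<le> real s / Q"
    if Wb: "\<And>i. i \<in> {1..s} \<Longrightarrow> \<bar>real (W i) / Q - b i\<bar> \<le> 1 / Q"
      and Wq: "\<And>i. i \<in> {1..s} \<Longrightarrow> W i \<le> q ^ L" for W
  proof -
    have "norm ((\<Prod>i=1..s. real (W i) / Q) - (\<Prod>i=1..s. b i)) \<le> (\<Sum>i=1..s. norm (real (W i) / Q - b i))"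
    proof (rule norm_prod_diff)
      fix i assume i: "i \<in> {1..s}"
      have "real (W i) \<le> Q" using Wq[OF i] unfolding Q_def by (metis of_nat_le_iff of_nat_power)
      then show "norm (real (W i) / Q) \<le> 1" using Qpos by simp
      show "norm (b i) \<le> 1" using b i by simp
    qed
    also have "\<dots> \<le> (\<Sum>i=1..s. 1 / Q)" by (rule sum_mono) (simp add: Wb)
    finally show ?thesis by simp
  qed
  have pU: "\<bar>(\<Prod>i=1..s. real (U i) / Q) - (\<Prod>i=1..s. b i)\<bar> \<le> real s / Q"
    by (rule prod_bound) (simp_all add: Ub U_le)
  have pV: "\<bar>(\<Prod>i=1..s. real (V i) / Q) - (\<Prod>i=1..s. b i)\<bar> \<le> real s / Q"
    by (rule prod_bound) (simp_all add: Vb V_le)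
  have bU: "\<bar>real (card {n. n < N \<and> (\<forall>i\<in>{1..s}. Y i n < U i)}) - real N * (\<Prod>i=1..s. real (U i) / Q)\<bar> \<le> E"
    using box[of U] U_le by (simp add: Q_def)
  have bV: "\<bar>real (card {n. n < N \<and> (\<forall>i\<in>{1..s}. Y i n < V i)}) - real N * (\<Prod>i=1..s. real (V i) / Q)\<bar> \<le> E"
    using box[of V] V_le by (simp add: Q_def)
  have sub1: "{n. n < N \<and> (\<forall>i\<in>{1..s}. x n i < b i)} \<subseteq> {n. n < N \<and> (\<forall>i\<in>{1..s}. Y i n < U i)}"
  proof
    fix n assume "n \<in> {n. n < N \<and> (\<forall>i\<in>{1..s}. x n i < b i)}"
    then have n: "n < N" "\<forall>i\<in>{1..s}. x n i < b i" by auto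
    have "Y i n < U i" if i: "i \<in> {1..s}" for i
    proof -
      have "real (Y i n) / Q \<le> x n i" using xb[OF i, of n] unfolding Q_def by simp
      then have "real (Y i n) / Q < b i" using n(2) i by fastforce
      then have "real (Y i n) < b i * Q" using Qpos by (simp add: field_simps)
      also have "\<dots> \<le> of_int \<lceil>b i * Q\<rceil>" by linarith
      finally have "real (Y i n) < real (U i)" using U_real[OF i] by simp
      then show "Y i n < U i" by simp
    qed
    then show "n \<in> {n. n < N \<and> (\<forall>i\<in>{1..s}. Y i n < U i)}" using n(1) by auto
  qed
  have sub2: "{n. n < N \<and> (\<forall>i\<in>{1..s}. Y i n < V i)} \<subseteq> {n. n < N \<and> (\<forall>i\<in>{1..s}. x n i < b i)}"
  proof
    fix n assume "n \<in> {n. n < N \<and> (\<forall>i\<in>{1..s}. Y i n < V i)}"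
    then have n: "n < N" "\<forall>i\<in>{1..s}. Y i n < V i" by auto
    have "x n i < b i" if i: "i \<in> {1..s}" for i
    proof -
      have "Y i n < V i" using n(2) i by auto
      then have "Y i n + 1 < U i" "U i \<ge> 1" by (auto simp: V_def)
      then have "real (Y i n) + 1 \<le> real (U i) - 1" by linarith
      also have "\<dots> < b i * Q" using U_real[OF i] by linarith
      finally have "(real (Y i n) + 1) / Q < b i" using Qpos by (simp add: field_simps)
      moreover have "x n i \<le> (real (Y i n) + 1) / Q" using xb[OF i, of n] unfolding Q_def by simp
      ultimately show "x n i < b i" by linarith
    qed
    then show "n \<in> {n. n < N \<and> (\<forall>i\<in>{1..s}. x n i < b i)}" using n(1) by auto
  qed
  define cx where "cx = real (card {n. n < N \<and> (\<forall>i\<in>{1..s}. x n i < b i)})"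
  have c1: "cx \<le> real (card {n. n < N \<and> (\<forall>i\<in>{1..s}. Y i n < U i)})"
  proof -
    have "card {n. n < N \<and> (\<forall>i\<in>{1..s}. x n i < b i)} \<le> card {n. n < N \<and> (\<forall>i\<in>{1..s}. Y i n < U i)}"
      by (rule card_mono[OF _ sub1]) (rule finite_subset[of _ "{..<N}"], auto)
    then show ?thesis unfolding cx_def by simp
  qed
  have c2: "real (card {n. n < N \<and> (\<forall>i\<in>{1..s}. Y i n < V i)}) \<le> cx"
  proof -
    have "card {n. n < N \<and> (\<forall>i\<in>{1..s}. Y i n < V i)} \<le> card {n. n < N \<and> (\<forall>i\<in>{1..s}. x n i < b i)}"
      by (rule card_mono[OF _ sub2]) (rule finite_subset[of _ "{..<N}"], auto)
    then show ?thesis unfolding cx_def by simp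
  qed
  have Ns: "real N * (real s / Q) \<le> real s"
    using QN Qpos by (simp add: field_simps mult_right_mono)
  have nU: "real N * \<bar>(\<Prod>i=1..s. real (U i) / Q) - (\<Prod>i=1..s. b i)\<bar> \<le> real s"
    using mult_left_mono[OF pU, of "real N"] Ns by simp
  have nV: "real N * \<bar>(\<Prod>i=1..s. real (V i) / Q) - (\<Prod>i=1..s. b i)\<bar> \<le> real s"
    using mult_left_mono[OF pV, of "real N"] Ns by simp
  have up: "cx - real N * (\<Prod>i=1..s. b i) \<le> E + real s"
  proof -
    have "real N * ((\<Prod>i=1..s. real (U i) / Q) - (\<Prod>i=1..s. b i))
        \<le> real N * \<bar>(\<Prod>i=1..s. real (U i) / Q) - (\<Prod>i=1..s. b i)\<bar>"
      by (rule mult_left_mono) auto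
    then have "real N * (\<Prod>i=1..s. real (U i) / Q) - real N * (\<Prod>i=1..s. b i) \<le> real s"
      using nU by (simp add: right_diff_distrib)
    then show ?thesis using c1 bU by (simp add: abs_le_iff)
  qed
  have lo: "real N * (\<Prod>i=1..s. b i) - cx \<le> E + real s"
  proof -
    have "real N * ((\<Prod>i=1..s. b i) - (\<Prod>i=1..s. real (V i) / Q))
        \<le> real N * \<bar>(\<Prod>i=1..s. real (V i) / Q) - (\<Prod>i=1..s. b i)\<bar>"
      by (rule mult_left_mono) auto
    then have "real N * (\<Prod>i=1..s. b i) - real N * (\<Prod>i=1..s. real (V i) / Q) \<le> real s"
      using nV by (simp add: right_diff_distrib)
    then show ?thesis using c2 bV by (simp add: abs_le_iff)
  qed
  have "\<bar>cx - real N * (\<Prod>i=1..s. b i)\<bar> \<le> E + real s" using up lo by (simp add: abs_le_iff)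
  then have "\<bar>cx - real N * (\<Prod>i=1..s. b i)\<bar> / real N \<le> (E + real s) / real N"
    using N by (simp add: divide_right_mono)
  moreover have "\<bar>cx - real N * (\<Prod>i=1..s. b i)\<bar> / real N = \<bar>cx / real N - (\<Prod>i=1..s. b i)\<bar>"
    using N by (simp add: field_simps)
  ultimately show ?thesis unfolding cx_def by simp
qed

lemma log_bound:
  fixes q N :: nat assumes q: "q \<ge> 2" and N: "N \<ge> 2"
  shows "N \<le> q ^ nat \<lceil>log q N\<rceil>"
    and "real (nat \<lceil>log q N\<rceil>) + 1 \<le> (1 / ln q + 2 / ln 2) * ln N"
proof -
  define l where "l = log q N"
  have qr: "real q > 1" using q by simp
  have l0: "l \<ge> 0" unfolding l_def using qr N by simp
  define L where "L = nat \<lceil>l\<rceil>"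
  have Lr: "real L = of_int \<lceil>l\<rceil>" unfolding L_def using l0 by simp
  have lL: "l \<le> real L" using Lr by linarith
  have "real N = real q powr l" unfolding l_def using qr N by simp
  also have "\<dots> \<le> real q powr real L" using lL qr by (intro powr_mono) auto
  also have "\<dots> = real q ^ L" using qr by (simp add: powr_realpow)
  finally have "real N \<le> real (q ^ L)" by simp
  then show "N \<le> q ^ nat \<lceil>log q N\<rceil>" unfolding L_def l_def by (simp only: of_nat_le_iff)
  have "real L < l + 1" using Lr by linarith
  moreover have "l = ln N / ln q" unfolding l_def by (simp add: log_def)
  moreover have "2 \<le> 2 / ln 2 * ln N"
  proof -
    have "ln 2 \<le> ln (real N)" using N by simp
    then show ?thesis by (simp add: field_simps)
  qed
  ultimately have "real L + 1 \<le> ln N / ln q + 2 / ln 2 * ln N" by linarith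
  then show "real (nat \<lceil>log q N\<rceil>) + 1 \<le> (1 / ln q + 2 / ln 2) * ln N"
    unfolding L_def l_def by (simp add: field_simps)
qed

theorem corollary3:
  fixes s t v :: nat
    and C :: "nat \<Rightarrow> nat \<Rightarrow> nat \<Rightarrow> 'f::{field,finite}"
    and \<psi> :: "nat \<Rightarrow> nat \<Rightarrow> 'f"
    and lam :: "nat \<Rightarrow> nat \<Rightarrow> 'f \<Rightarrow> nat"
    and \<alpha> :: "nat \<Rightarrow> nat"
    and sd :: "nat \<Rightarrow> nat \<Rightarrow> nat"
  assumes s_pos: "1 \<le> s"
    and finite_row: "\<forall>i\<in>{1..s}. \<forall>j\<ge>1. finite {r. C i j r \<noteq> 0}"
    and lin_indep: "\<forall>m>t. \<forall>d::nat\<Rightarrow>nat.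
          1 \<le> (\<Sum>i=1..s. d i) \<and> (\<Sum>i=1..s. d i) \<le> m - t \<longrightarrow>
          (\<forall>e::nat\<Rightarrow>nat\<Rightarrow>'f.
             (\<forall>r<m. (\<Sum>i=1..s. \<Sum>j=1..d i. e i j * C i j r) = 0) \<longrightarrow>
             (\<forall>i\<in>{1..s}. \<forall>j\<in>{1..d i}. e i j = 0))"
    and psi_bij: "\<forall>r. bij_betw (\<psi> r) {..<CARD('f)} (UNIV :: 'f set)"
    and lambda_bij: "\<forall>i\<in>{1..s}. \<forall>j\<ge>1. bij_betw (lam i j) (UNIV :: 'f set) {..<CARD('f)}"
    and alpha: "qadic_digits CARD('f) \<alpha>"
    and v_pos: "1 \<le> v"
    and v_coprime: "coprime v CARD('f)"
    and sd_def: "\<forall>n. is_qadic_seq_term CARD('f) v \<alpha> n (sd n)"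
  shows "\<exists>K::real. \<forall>N\<ge>2.
           real N * star_discrepancy s (\<lambda>n i. alg2_coord C \<psi> lam (sd n) i) N
             \<le> K * ln (real N) ^ s"
proof -
  define q where "q = CARD('f)"
  have q2: "q \<ge> 2" unfolding q_def by (rule card_field_ge2)
  define \<delta> where "\<delta> i j n = lam i j (\<Sum>r\<in>{r. C i j r \<noteq> 0}. C i j r * \<psi> r (sd n r))" for i j n
  have \<delta>lt: "\<delta> i j n < q" if "i \<in> {1..s}" "j \<ge> 1" for i j n
  proof -
    have "bij_betw (lam i j) (UNIV :: 'f set) {..<CARD('f)}" using lambda_bij that by blast
    then show ?thesis unfolding \<delta>_def q_def using bij_betwE by fastforce
  qed
  define x where "x = (\<lambda>n i. alg2_coord C \<psi> lam (sd n) i)"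
  define Ec where "Ec L = 2 * real v * real q ^ t * real ((L+1)*q) ^ s" for L
  have main: "real N * star_discrepancy s x N \<le> Ec L + real s" if N: "0 < N" "N \<le> q ^ L" for N L
  proof -
    define Y where "Y i n = (\<Sum>r<L. \<delta> i (L - r) n * q ^ r)" for i n
    have xb: "real (Y i n) / real q ^ L \<le> x n i \<and> x n i \<le> (real (Y i n) + 1) / real q ^ L"
      if i: "i \<in> {1..s}" for n i
    proof -
      have dq: "\<And>j. \<delta> i (Suc j) n < q" using \<delta>lt i by simp
      have xe: "x n i = (\<Sum>j. real (\<delta> i (Suc j) n) / real q ^ Suc j)"
        by (simp add: x_def alg2_coord_def \<delta>_def q_def)
      show ?thesis unfolding xe Y_def using digit_series[of q "\<lambda>j. \<delta> i j n" L, OF q2 dq] by simp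
    qed
    have Ylt: "Y i n < q ^ L" if i: "i \<in> {1..s}" for i n
      unfolding Y_def by (rule digsum_lt) (use \<delta>lt i in auto)
    have Ydig: "(Y i n div q ^ r) mod q = \<delta> i (L - r) n" if i: "i \<in> {1..s}" and r: "r < L" for i n r
      unfolding Y_def
    proof (rule digsum_digit[of L "\<lambda>r. \<delta> i (L - r) n" q r])
      show "\<And>r'. r' < L \<Longrightarrow> \<delta> i (L - r') n < q" using \<delta>lt i by simp
    qed (rule r)
    have cell: "\<bar>real (card {n. n < N \<and> (\<forall>i\<in>{1..s}. Y i n \<in> {a i * q^e i ..< (a i + 1) * q^e i})})
         - real N * (\<Prod>i=1..s. real (q^e i) / real (q^L))\<bar> \<le> 2 * real v * real q ^ t"
      if ea: "\<forall>i\<in>{1..s}. e i \<le> L \<and> a i < q^(L - e i)" for e a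
    proof -
      define k where "k i = L - e i" for i
      define \<pi> where "\<pi> i j = (a i div q ^ (k i - j)) mod q" for i j
      have memb: "Y i n \<in> {a i * q^e i ..< (a i + 1) * q^e i} \<longleftrightarrow> (\<forall>j\<in>{1..k i}. \<delta> i j n = \<pi> i j)"
        if i: "i \<in> {1..s}" for i n
      proof -
        have qpos: "q ^ e i > 0" using q2 by simp
        have "Y i n \<in> {a i * q^e i ..< (a i + 1) * q^e i} \<longleftrightarrow> a i \<le> Y i n div q ^ e i \<and> Y i n div q ^ e i < a i + 1"
          using qpos by (simp add: less_eq_div_iff_mult_less_eq div_less_iff_less_mult)
        also have "\<dots> \<longleftrightarrow> Y i n div q ^ e i = a i" by linarith
        also have "\<dots> \<longleftrightarrow> (\<forall>r. e i \<le> r \<and> r < L \<longrightarrow> (Y i n div q ^ r) mod q = (a i div q ^ (r - e i)) mod q)"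
          by (rule prefix_digits[OF q2 Ylt[OF i]]) (use ea i in auto)
        also have "\<dots> \<longleftrightarrow> (\<forall>r. e i \<le> r \<and> r < L \<longrightarrow> \<delta> i (L - r) n = (a i div q ^ (r - e i)) mod q)"
          using Ydig[OF i] by auto
        also have "\<dots> \<longleftrightarrow> (\<forall>j\<in>{1..k i}. \<delta> i j n = \<pi> i j)"
        proof
          assume h: "\<forall>r. e i \<le> r \<and> r < L \<longrightarrow> \<delta> i (L - r) n = (a i div q ^ (r - e i)) mod q"
          show "\<forall>j\<in>{1..k i}. \<delta> i j n = \<pi> i j"
          proof
            fix j assume j: "j \<in> {1..k i}"
            have r1: "e i \<le> L - j \<and> L - j < L" using j by (auto simp: k_def)
            have "L - (L - j) = j" using j by (auto simp: k_def)
            moreover have "L - j - e i = k i - j" by (simp add: k_def)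
            ultimately show "\<delta> i j n = \<pi> i j" using h[rule_format, OF r1] by (simp add: \<pi>_def)
          qed
        next
          assume h: "\<forall>j\<in>{1..k i}. \<delta> i j n = \<pi> i j"
          show "\<forall>r. e i \<le> r \<and> r < L \<longrightarrow> \<delta> i (L - r) n = (a i div q ^ (r - e i)) mod q"
          proof (intro allI impI)
            fix r assume r: "e i \<le> r \<and> r < L"
            have j1: "L - r \<in> {1..k i}" using r by (auto simp: k_def)
            have "k i - (L - r) = r - e i" using r by (auto simp: k_def)
            then show "\<delta> i (L - r) n = (a i div q ^ (r - e i)) mod q" using h j1 by (simp add: \<pi>_def)
          qed
        qed
        finally show ?thesis .
      qed
      have set_eq: "{n. n < N \<and> (\<forall>i\<in>{1..s}. Y i n \<in> {a i * q^e i ..< (a i + 1) * q^e i})}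
          = {n. n < N \<and> (\<forall>i\<in>{1..s}. \<forall>j\<in>{1..k i}.
              lam i j (\<Sum>r\<in>{r. C i j r \<noteq> 0}. C i j r * \<psi> r (sd n r)) = \<pi> i j)}"
        using memb unfolding \<delta>_def by auto
      have prod_eq: "real N * (\<Prod>i=1..s. real (q^e i) / real (q^L)) = real N / real q ^ (\<Sum>i=1..s. k i)"
      proof -
        have "real (q^e i) / real (q^L) = 1 / real q ^ k i" if i: "i \<in> {1..s}" for i
        proof -
          have "q ^ L = q ^ e i * q ^ k i" using ea i by (simp add: k_def flip: power_add)
          then show ?thesis using q2 by simp
        qed
        then have "(\<Prod>i=1..s. real (q^e i) / real (q^L)) = (\<Prod>i=1..s. 1 / real q ^ k i)"
          by (rule prod.cong[OF refl])
        also have "\<dots> = 1 / real q ^ (\<Sum>i=1..s. k i)"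
          by (simp add: prod_dividef power_sum)
        finally show ?thesis by simp
      qed
      have pi: "\<forall>i\<in>{1..s}. \<forall>j\<in>{1..k i}. \<pi> i j < CARD('f)" using q2 by (simp add: \<pi>_def q_def)
      note h = seq_cell_count[OF finite_row lin_indep psi_bij lambda_bij v_pos v_coprime sd_def pi, of N]
      show ?thesis unfolding set_eq prod_eq using h by (simp only: q_def)
    qed
    have box: "\<bar>real (card {n. n < N \<and> (\<forall>i\<in>{1..s}. Y i n < U i)})
       - real N * (\<Prod>i=1..s. real (U i) / real (q ^ L))\<bar> \<le> Ec L" if U: "\<forall>i\<in>{1..s}. U i \<le> q ^ L" for U
      unfolding Ec_def by (rule box_count[OF q2 _ cell U]) simp_all
    have each: "\<bar>real (card {n. n < N \<and> (\<forall>i\<in>{1..s}. x n i < b i)}) / real N - (\<Prod>i=1..s. b i)\<bar>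
        \<le> (Ec L + real s) / real N" if b: "b \<in> {b::nat\<Rightarrow>real. \<forall>i\<in>{1..s}. 0 \<le> b i \<and> b i \<le> 1}" for b
      by (rule box_sandwich[OF q2 N(1) N(2) xb box]) (use b in auto)
    have "star_discrepancy s x N \<le> (Ec L + real s) / real N"
      unfolding star_discrepancy_def
    proof (rule cSUP_least)
      have "(\<lambda>_. 0::real) \<in> {b::nat\<Rightarrow>real. \<forall>i\<in>{1..s}. 0 \<le> b i \<and> b i \<le> 1}" by simp
      then show "{b::nat\<Rightarrow>real. \<forall>i\<in>{1..s}. 0 \<le> b i \<and> b i \<le> 1} \<noteq> {}" by (metis empty_iff)
    qed (rule each)
    then show ?thesis using N(1) by (simp add: field_simps)
  qed
  define c where "c = 1 / ln (real q) + 2 / ln 2"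
  define K where "K = 2 * real v * real q ^ t * (c * real q) ^ s + real s / ln 2 ^ s"
  show ?thesis
  proof (intro exI allI impI)
    fix N :: nat assume N: "2 \<le> N"
    define L where "L = nat \<lceil>log q N\<rceil>"
    have NL: "N \<le> q ^ L" unfolding L_def by (rule log_bound(1)[OF q2 N])
    have L1: "real L + 1 \<le> c * ln N" unfolding L_def c_def by (rule log_bound(2)[OF q2 N])
    have lnN: "ln 2 \<le> ln (real N)" using N by simp
    have ln2: "ln (2::real) > 0" by simp
    have m: "real N * star_discrepancy s x N \<le> Ec L + real s" using main[of N L] N NL by simp
    have "real ((L+1)*q) = (real L + 1) * real q" by (simp add: algebra_simps)
    then have "Ec L = 2 * real v * real q ^ t * ((real L + 1) * real q) ^ s" by (simp only: Ec_def)
    also have "\<dots> \<le> 2 * real v * real q ^ t * ((c * ln N) * real q) ^ s"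
      by (intro mult_left_mono power_mono mult_right_mono L1) auto
    also have "\<dots> = 2 * real v * real q ^ t * (c * real q) ^ s * ln N ^ s"
      by (simp add: power_mult_distrib mult_ac)
    finally have e1: "Ec L \<le> 2 * real v * real q ^ t * (c * real q) ^ s * ln N ^ s" .
    have "ln 2 ^ s \<le> ln (real N) ^ s" using lnN ln2 by (intro power_mono) auto
    then have e2: "real s \<le> real s / ln 2 ^ s * ln N ^ s" using ln2 by (simp add: field_simps mult_left_mono)
    have "real N * star_discrepancy s x N \<le> K * ln (real N) ^ s"
      using m e1 e2 unfolding K_def by (simp add: algebra_simps)
    then show "real N * star_discrepancy s (\<lambda>n i. alg2_coord C \<psi> lam (sd n) i) N \<le> K * ln (real N) ^ s"
      unfolding x_def .
  qed
qed

end
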